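(* Assume the setting described in the context. Let $q,r\in\mathbb{N}$ and $Q,R>0$ with $q\in(Q,2Q]$, $r\in(R,2R]$, $r<q$, and let $k,\ell$ be integers with $2^{-k}<\psi(q)\le2^{-k+1}$ and $2^{-\ell}<\psi(r)\le2^{-\ell+1}$. Put $$\Delta=\max\left\{\tfrac{2\psi(q)}{q},\tfrac{2\psi(r)}{r}\right\},\quad \delta=\min\left\{\tfrac{2\psi(q)}{q},\tfrac{2\psi(r)}{r}\right\},\quad D=\Delta\frac{qr}{\gcd(q,r)},$$ $q'=q/\gcd(q,r)$, $r'=r/\gcd(q,r)$, $h=q'-r'$. Let $\bullet=k$ if $\psi(q)/q>\psi(r)/r$ and $\bullet=\ell$ if $\psi(q)/q\le\psi(r)/r$, and let $\widehat D=\max\{D,\,h|\boldsymbol\gamma-\mathbf A_\bullet/B_\bullet|\}$. Then, with absolute implied constants: (1) $\lambda(E_q'\cap E_r')\ll\delta^2\gcd(q,r)^2(D^2+1)\ll\lambda(E_q')\lambda(E_r')+D^{-2}\lambda(E_q')\lambda(E_r')$. (2) If $r\nmid q$ and $B_\bullet\le\max\{2^\bullet D,2^{\sigma\bullet}\}$, then $$\lambda(E_q'\cap E_r')\ll\lambda(E_q')\lambda(E_r')+\frac{1}{D^2}\lambda(E_q')\lambda(E_r')\,\mathbb 1[\|h\boldsymbol\gamma\|<D]\left(\mathbb 1[2\widehat D\ge 1/B_\bullet]\,\mathbb 1[B_\bullet\le2^{\sigma\bullet}]+\mathbb 1[2^{\sigma\bullet}<B_\bullet]\right).$$ (3) If $r\nmid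 q$ and $B_\bullet>\max\{2^\bullet D,2^{\sigma\bullet}\}$, then $$\lambda(E_q'\cap E_r')\ll\lambda(E_q')\lambda(E_r')+\frac{1}{D^2}\lambda(E_q')\lambda(E_r')\,\mathbb 1[\|h\boldsymbol\gamma\|<D]\left(\mathbb 1[2D\ge1/b_\bullet]\,\mathbb 1[h\|b_\bullet\boldsymbol\gamma\|\le1/2]+\mathbb 1[h\|b_\bullet\boldsymbol\gamma\|>1/2]\right).$$
   Context: Notation: $|\cdot|$ is the maximum norm on $\mathbb{R}^2$; $\|\mathbf x\|$ is the max-norm distance from $\mathbf x\in\mathbb{R}^2$ to $\mathbb{Z}^2$; $\lambda$ is Lebesgue measure on $\mathbb{R}^2$; $\mathbb 1[\cdot]$ is the indicator of a condition; for an integer vector $\mathbf x=(x_1,x_2)$ and integer $n$, $\gcd(\mathbf x,n)=\gcd(x_1,x_2,n)$. Shift reduction: Fix $\boldsymbol\gamma\in\mathbb{R}^2\setminus\mathbb{Q}^2$ and $\sigma\in(0,1)$. For $k\ge0$ let $B_k\ge1$ be the smallest integer for which there exists $\mathbf A_k\in\mathbb{Z}^2$ with $|\boldsymbol\gamma-\mathbf A_k/B_k|<2^{-k}$, and fix such an $\mathbf A_k$. When $B_k\ge2$, let $1\le b_k<B_k$ be minimal such that there exists $\mathbf a_k\in\mathbb{Z}^2$ with $|\boldsymbol\gamma-\mathbf a_k/b_k|\le1/(b_kB_k^{1/2})$, and fix such an $\mathbf a_k$. Let $K_0$ be such that $B_k\ge2$ for all $k\ge K_0$. Let $\psi:\mathbb{N}\to[0,1/2]$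 satisfy $\psi(q)<2^{-K_0+1}$ for all $q$. For $q$ with $\psi(q)>0$, let $k$ be the integer with $2^{-k}<\psi(q)\le2^{-k+1}$ and set $$S_q=\begin{cases}\{\mathbf u\in(\mathbb{Z}/q\mathbb{Z})^2:\gcd(B_k\mathbf u+\mathbf A_k,B_kq)=1\}&\text{if }B_k\le 2^{\sigma k},\\ \{\mathbf u\in(\mathbb{Z}/q\mathbb{Z})^2:\gcd(b_k\mathbf u+\mathbf a_k,b_kq)=1\}&\text{if }B_k>2^{\sigma k},\end{cases}$$ $$E_q'=\{\boldsymbol\alpha\in[0,1]^2:|q\boldsymbol\alpha-\mathbf u-\boldsymbol\gamma|<\psi(q)\text{ for some }\mathbf u\in\mathbb{Z}^2\text{ with class mod }q\text{ in }S_q\}.$$ *)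

theory Defs
  imports "HOL-Analysis.Analysis"
begin

definition mnorm :: "real \<times> real \<Rightarrow> real" where
  "mnorm x = max \<bar>fst x\<bar> \<bar>snd x\<bar>"

definition distZ :: "real \<Rightarrow> real" where
  "distZ t = min (frac t) (1 - frac t)"

definition distZ2 :: "real \<times> real \<Rightarrow> real" where
  "distZ2 x = max (distZ (fst x)) (distZ (snd x))"

definition ratpt :: "int \<times> int \<Rightarrow> nat \<Rightarrow> real \<times> real" where
  "ratpt a n = (of_int (fst a) / real n, of_int (snd a) / real n)"

definition ivec :: "int \<times> int \<Rightarrow> real \<times> real" where
  "ivec u = (of_int (fst u), of_int (snd u))"

definition Bk :: "real \<times> real \<Rightarrow> nat \<Rightarrow> nat" where
  "Bk \<gamma> k = (LEAST B::nat. 1 \<le> B \<and> (\<exists>A. mnorm (\<gamma> - ratpt A B) < 2 powr (- real k)))"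

definition bk :: "real \<times> real \<Rightarrow> nat \<Rightarrow> nat" where
  "bk \<gamma> k = (LEAST b::nat. 1 \<le> b \<and> b < Bk \<gamma> k \<and>
      (\<exists>a. mnorm (\<gamma> - ratpt a b) \<le> 1 / (real b * sqrt (real (Bk \<gamma> k)))))"

definition gcd3 :: "int \<times> int \<Rightarrow> int \<Rightarrow> int" where
  "gcd3 x n = gcd (gcd (fst x) (snd x)) n"

definition setting :: "real \<times> real \<Rightarrow> real \<Rightarrow> (nat \<Rightarrow> int \<times> int) \<Rightarrow> (nat \<Rightarrow> int \<times> int)
    \<Rightarrow> nat \<Rightarrow> (nat \<Rightarrow> real) \<Rightarrow> bool" where
  "setting \<gamma> \<sigma> A a K0 \<psi> \<longleftrightarrow>
     \<not> (fst \<gamma> \<in> \<rat> \<and> snd \<gamma> \<in> \<rat>) \<and> 0 < \<sigma> \<and> \<sigma> < 1 \<and>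
     (\<forall>k. mnorm (\<gamma> - ratpt (A k) (Bk \<gamma> k)) < 2 powr (- real k)) \<and>
     (\<forall>k. 2 \<le> Bk \<gamma> k \<longrightarrow>
        mnorm (\<gamma> - ratpt (a k) (bk \<gamma> k)) \<le> 1 / (real (bk \<gamma> k) * sqrt (real (Bk \<gamma> k)))) \<and>
     (\<forall>k\<ge>K0. 2 \<le> Bk \<gamma> k) \<and>
     (\<forall>q. 0 \<le> \<psi> q \<and> \<psi> q \<le> 1/2 \<and> \<psi> q < 2 powr (1 - real K0))"

text \<open>The index k with 2^(-k) < psi(q) \<le> 2^(-k+1) (necessarily k \<ge> 2 since psi \<le> 1/2).\<close>
definition kidx :: "(nat \<Rightarrow> real) \<Rightarrow> nat \<Rightarrow> nat" where
  "kidx \<psi> q = (THE k::nat. 2 powr (- real k) < \<psi> q \<and> \<psi> q \<le> 2 powr (1 - real k))"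

text \<open>S_q, as a set of representatives in {0..<q}^2 of (Z/qZ)^2.\<close>
definition Sq :: "real \<times> real \<Rightarrow> real \<Rightarrow> (nat \<Rightarrow> int \<times> int) \<Rightarrow> (nat \<Rightarrow> int \<times> int)
    \<Rightarrow> (nat \<Rightarrow> real) \<Rightarrow> nat \<Rightarrow> (int \<times> int) set" where
  "Sq \<gamma> \<sigma> A a \<psi> q =
    (let k = kidx \<psi> q; B = Bk \<gamma> k; b = bk \<gamma> k in
     if real B \<le> 2 powr (\<sigma> * real k) then
       {u \<in> {0..<int q} \<times> {0..<int q}.
          gcd3 (int B * fst u + fst (A k), int B * snd u + snd (A k)) (int B * int q) = 1}
     else
       {u \<in> {0..<int q} \<times> {0..<int q}.
          gcd3 (int b * fst u + fst (a k), int b * snd u + snd (a k)) (int b * int q) = 1})"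

definition Eq' :: "real \<times> real \<Rightarrow> real \<Rightarrow> (nat \<Rightarrow> int \<times> int) \<Rightarrow> (nat \<Rightarrow> int \<times> int)
    \<Rightarrow> (nat \<Rightarrow> real) \<Rightarrow> nat \<Rightarrow> (real \<times> real) set" where
  "Eq' \<gamma> \<sigma> A a \<psi> q =
    {\<alpha>. 0 \<le> fst \<alpha> \<and> fst \<alpha> \<le> 1 \<and> 0 \<le> snd \<alpha> \<and> snd \<alpha> \<le> 1 \<and> 0 < \<psi> q \<and>
       (\<exists>u::int \<times> int. (fst u mod int q, snd u mod int q) \<in> Sq \<gamma> \<sigma> A a \<psi> q \<and>
          mnorm (real q *\<^sub>R \<alpha> - ivec u - \<gamma>) < \<psi> q)}"

end

theory Submission
  imports Defs
begin
lemma box2_measure: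
  fixes a1 a2 b1 b2 :: real
  assumes "a1 \<le> b1" "a2 \<le> b2"
  shows "measure lebesgue (box (a1,a2) (b1,b2)) = (b1-a1)*(b2-a2)"
proof -
  have "measure lebesgue (box (a1,a2) (b1,b2)) = measure lborel (box (a1,a2) (b1,b2))"
    by simp
  also have "\<dots> = (\<Prod>b\<in>Basis. ((b1,b2) - (a1,a2)) \<bullet> b)"
    by (rule measure_lborel_box) (use assms in \<open>auto simp: Basis_prod_def inner_Pair\<close>)
  also have "\<dots> = (b1-a1)*(b2-a2)"
    by (simp add: Basis_prod_def inner_Pair)
  finally show ?thesis .
qed

lemma cbox2_measure:
  fixes a1 a2 b1 b2 :: real
  assumes "a1 \<le> b1" "a2 \<le> b2"
  shows "measure lebesgue (cbox (a1,a2) (b1,b2)) = (b1-a1)*(b2-a2)"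
proof -
  have "measure lebesgue (cbox (a1,a2) (b1,b2)) = measure lborel (cbox (a1,a2) (b1,b2))"
    by simp
  also have "\<dots> = (\<Prod>b\<in>Basis. ((b1,b2) - (a1,a2)) \<bullet> b)"
    by (rule measure_lborel_cbox) (use assms in \<open>auto simp: Basis_prod_def inner_Pair\<close>)
  also have "\<dots> = (b1-a1)*(b2-a2)"
    by (simp add: Basis_prod_def inner_Pair)
  finally show ?thesis .
qed

lemma mem_box2: "(x::real\<times>real) \<in> box (a1,a2) (b1,b2) \<longleftrightarrow> a1 < fst x \<and> fst x < b1 \<and> a2 < snd x \<and> snd x < b2"
  by (cases x) (auto simp: mem_box Basis_prod_def)

lemma mem_cbox2: "(x::real\<times>real) \<in> cbox (a1,a2) (b1,b2) \<longleftrightarrow> a1 \<le> fst x \<and> fst x \<le> b1 \<and> a2 \<le> snd x \<and> snd x \<le> b2"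
  by (cases x) (auto simp: mem_box Basis_prod_def)

lemma lm_fin: "S \<in> lmeasurable \<Longrightarrow> emeasure lebesgue S \<noteq> \<infinity>"
  using fmeasurableD2 by (metis infinity_ennreal_def)

lemma abs_lt1_int: "\<bar>of_int (k::int)\<bar> < (1::real) \<Longrightarrow> k = 0"
  by linarith

lemma dirichlet_core:
  fixes g :: "real \<times> real" and B :: nat
  assumes B5: "B \<ge> 5"
  and H: "\<And>c m1 m2. 1 \<le> c \<Longrightarrow> c < int B \<Longrightarrow>
            max \<bar>of_int c * fst g - of_int m1\<bar> \<bar>of_int c * snd g - of_int m2\<bar> > 1 / sqrt B"
  shows False
proof -
  define s where "s = 1 / sqrt B"
  have s0: "s > 0" using B5 by (simp add: s_def)
  have sB: "s * s * B = 1" using B5 by (simp add: s_def)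
  have sle: "s < 1/2"
  proof -
    have "2 < sqrt B" using B5 by (intro real_less_rsqrt) simp
    then show ?thesis unfolding s_def by (simp add: divide_less_eq)
  qed
  define f where "f c = max \<bar>of_int c * fst g - of_int (round (of_int c * fst g))\<bar>
        \<bar>of_int c * snd g - of_int (round (of_int c * snd g))\<bar> - s" for c :: int
  define \<eta> where "\<eta> = Min (insert (1/4) (f ` {1..<int B}))"
  have \<eta>pos: "\<eta> > 0" unfolding \<eta>_def
    using H by (subst Min_gr_iff) (auto simp: f_def s_def)
  have \<eta>le: "\<eta> \<le> 1/4" unfolding \<eta>_def by (intro Min_le) auto
  have sep1: "max \<bar>of_int c * fst g - of_int m1\<bar> \<bar>of_int c * snd g - of_int m2\<bar> \<ge> s + \<eta>"
    if "1 \<le> c" "c < int B" for c m1 m2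
  proof -
    have "\<eta> \<le> f c" unfolding \<eta>_def using that by (intro Min_le) auto
    moreover have "f c + s \<le> max \<bar>of_int c * fst g - of_int m1\<bar> \<bar>of_int c * snd g - of_int m2\<bar>"
      unfolding f_def using round_diff_minimal[of "of_int c * fst g" m1]
        round_diff_minimal[of "of_int c * snd g" m2] by linarith
    ultimately show ?thesis by linarith
  qed
  have sep: "b = b' \<and> k1 = 0 \<and> k2 = 0"
    if "b < B" "b' < B" "\<bar>(real b - real b') * fst g - of_int k1\<bar> < s + \<eta>"
       "\<bar>(real b - real b') * snd g - of_int k2\<bar> < s + \<eta>" for b b' :: nat and k1 k2 :: int
  proof (cases "b = b'")
    case True
    then show ?thesis using that sle \<eta>le by (auto intro: abs_lt1_int)
  next
    case False
    show ?thesis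
    proof (cases "b' < b")
      case True
      have "max \<bar>of_int (int b - int b') * fst g - of_int k1\<bar> \<bar>of_int (int b - int b') * snd g - of_int k2\<bar> \<ge> s + \<eta>"
        using True that by (intro sep1) auto
      then show ?thesis using that True by simp
    next
      case F: False
      have "max \<bar>of_int (int b' - int b) * fst g - of_int (-k1)\<bar> \<bar>of_int (int b' - int b) * snd g - of_int (-k2)\<bar> \<ge> s + \<eta>"
        using False F that by (intro sep1) auto
      moreover have "\<bar>of_int (int b' - int b) * fst g - of_int (-k1)\<bar> = \<bar>(real b - real b') * fst g - of_int k1\<bar>"
        by (simp add: algebra_simps abs_minus_commute)
      moreover have "\<bar>of_int (int b' - int b) * snd g - of_int (-k2)\<bar> = \<bar>(real b - real b') * snd g - of_int k2\<bar>"
        by (simp add: algebra_simps abs_minus_commute)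
      ultimately show ?thesis using that by linarith
    qed
  qed
  define P where "P b n = (frac (real b * fst g) + of_int (fst n), frac (real b * snd g) + of_int (snd n))"
    for b :: nat and n :: "int \<times> int"
  have Psep: "b = b' \<and> n = n'"
    if "b < B" "b' < B" "\<bar>fst (P b n) - fst (P b' n')\<bar> < s + \<eta>" "\<bar>snd (P b n) - snd (P b' n')\<bar> < s + \<eta>"
    for b b' n n'
  proof -
    define k1 where "k1 = floor (real b * fst g) - floor (real b' * fst g) - fst n + fst n'"
    define k2 where "k2 = floor (real b * snd g) - floor (real b' * snd g) - snd n + snd n'"
    have e1: "fst (P b n) - fst (P b' n') = (real b - real b') * fst g - of_int k1"
      by (simp add: P_def k1_def frac_def algebra_simps)
    have e2: "snd (P b n) - snd (P b' n') = (real b - real b') * snd g - of_int k2"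
      by (simp add: P_def k2_def frac_def algebra_simps)
    have "b = b' \<and> k1 = 0 \<and> k2 = 0" using sep[OF that(1,2)] that(3,4) e1 e2 by metis
    then show ?thesis by (auto simp: k1_def k2_def prod_eq_iff)
  qed
  define Sq where "Sq x = box (P (fst x) (snd x)) (P (fst x) (snd x) + (s, s))" for x :: "nat \<times> int \<times> int"
  define G where "G n = box (of_int (fst n) - \<eta>, of_int (snd n)) (of_int (fst n), of_int (snd n) + s)" for n :: "int \<times> int"
  have memSq: "y \<in> Sq x \<longleftrightarrow> fst (P (fst x) (snd x)) < fst y \<and> fst y < fst (P (fst x) (snd x)) + s \<and>
        snd (P (fst x) (snd x)) < snd y \<and> snd y < snd (P (fst x) (snd x)) + s" for x y
    unfolding Sq_def by (cases "P (fst x) (snd x)") (simp add: mem_box2)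
  have memG: "y \<in> G n \<longleftrightarrow> of_int (fst n) - \<eta> < fst y \<and> fst y < of_int (fst n) \<and>
        of_int (snd n) < snd y \<and> snd y < of_int (snd n) + s" for n y
    unfolding G_def by (simp add: mem_box2)
  have P0: "P 0 n = (of_int (fst n), of_int (snd n))" for n by (simp add: P_def)
  have SqG: "Sq x \<inter> G n = {}" if "fst x < B" for x n
  proof (rule ccontr)
    assume "Sq x \<inter> G n \<noteq> {}"
    then obtain y where y: "y \<in> Sq x" "y \<in> G n" by blast
    have "fst x = 0 \<and> snd x = n"
      using y B5 by (intro Psep that) (auto simp: memSq memG P0)
    then show False using y by (auto simp: memSq memG P0)
  qed
  have Sqdisj: "Sq x \<inter> Sq x' = {}" if "fst x < B" "fst x' < B" "x \<noteq> x'" for x x'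
  proof (rule ccontr)
    assume "Sq x \<inter> Sq x' \<noteq> {}"
    then obtain y where y: "y \<in> Sq x" "y \<in> Sq x'" by blast
    have "fst x = fst x' \<and> snd x = snd x'"
      using y \<eta>pos by (intro Psep that) (auto simp: memSq)
    then show False using that by (auto simp: prod_eq_iff)
  qed
  have Gdisj: "G n \<inter> G n' = {}" if "n \<noteq> n'" for n n'
  proof (rule ccontr)
    assume "G n \<inter> G n' \<noteq> {}"
    then obtain y where y: "y \<in> G n" "y \<in> G n'" by blast
    have "\<bar>of_int (fst n - fst n')\<bar> < (1::real)" "\<bar>of_int (snd n - snd n')\<bar> < (1::real)"
      using y \<eta>le sle by (auto simp: memG)
    then have "fst n - fst n' = 0" "snd n - snd n' = 0" by (auto dest: abs_lt1_int)
    then show False using that by (auto simp: prod_eq_iff)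
  qed
  define N :: nat where "N = nat (ceiling (9 / (\<eta> * s))) + 1"
  have N1: "N \<ge> 1" unfolding N_def by simp
  have N9: "real N * (\<eta> * s) \<ge> 9"
  proof -
    have "real N \<ge> 9 / (\<eta> * s)" unfolding N_def by linarith
    then show ?thesis using \<eta>pos s0 by (simp add: field_simps)
  qed
  define IN where "IN = {0..<int N} \<times> {0..<int N}"
  define IS where "IS = {0..<B} \<times> IN"
  have finIN: "finite IN" "finite IS" unfolding IS_def IN_def by auto
  have cardIN: "card IN = N * N" unfolding IN_def by (simp add: card_cartesian_product)
  have cardIS: "card IS = B * (N * N)" unfolding IS_def by (simp add: card_cartesian_product cardIN)
  define U1 where "U1 = (\<Union>x\<in>IS. Sq x)"
  define U2 where "U2 = (\<Union>n\<in>IN. G n)"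
  have mbox: "measure lebesgue (box (x1, x2) (x1 + s, x2 + s)) = s * s" for x1 x2
    using box2_measure[of x1 "x1 + s" x2 "x2 + s"] s0 by simp
  have mSq: "measure lebesgue (Sq x) = s * s" for x
    unfolding Sq_def using mbox by (metis add_Pair surj_pair)
  have mG: "measure lebesgue (G n) = \<eta> * s" for n
    unfolding G_def using s0 \<eta>pos box2_measure[of "of_int (fst n) - \<eta>" "of_int (fst n)" "of_int (snd n)" "of_int (snd n) + s"] by simp
  have Sqm: "Sq x \<in> lmeasurable" for x unfolding Sq_def by simp
  have Gm: "G n \<in> lmeasurable" for n unfolding G_def by simp
  have Sqf: "emeasure lebesgue (Sq x) \<noteq> \<infinity>" for x using fmeasurableD2[OF Sqm] by simp
  have Gf: "emeasure lebesgue (G x) \<noteq> \<infinity>" for x using fmeasurableD2[OF Gm] by simp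
  have mU1: "measure lebesgue U1 = real B * real N * real N * (s * s)"
  proof -
    have d: "disjoint_family_on Sq IS" using Sqdisj by (auto simp: disjoint_family_on_def IS_def)
    have "measure lebesgue U1 = (\<Sum>x\<in>IS. measure lebesgue (Sq x))"
      unfolding U1_def by (rule measure_finite_Union[OF finIN(2) _ d Sqf]) (use Sqm in auto)
    also have "\<dots> = real (card IS) * (s * s)" by (simp add: mSq)
    finally show ?thesis by (simp add: cardIS)
  qed
  have mU2: "measure lebesgue U2 = real N * real N * (\<eta> * s)"
  proof -
    have d: "disjoint_family_on G IN" using Gdisj by (auto simp: disjoint_family_on_def)
    have "measure lebesgue U2 = (\<Sum>x\<in>IN. measure lebesgue (G x))"
      unfolding U2_def by (rule measure_finite_Union[OF finIN(1) _ d Gf]) (use Gm in auto)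
    also have "\<dots> = real (card IN) * (\<eta> * s)" by (simp add: mG)
    finally show ?thesis by (simp add: cardIN)
  qed
  have U12: "U1 \<inter> U2 = {}" unfolding U1_def U2_def using SqG by (fastforce simp: IS_def)
  have U1m: "U1 \<in> lmeasurable" unfolding U1_def using finIN Sqm by (intro fmeasurable.finite_UN) auto
  have U2m: "U2 \<in> lmeasurable" unfolding U2_def using finIN Gm by (intro fmeasurable.finite_UN) auto
  have sub: "U1 \<union> U2 \<subseteq> cbox (-1, -1) (real N + 1, real N + 1)"
  proof
    fix y assume "y \<in> U1 \<union> U2"
    then show "y \<in> cbox (-1, -1) (real N + 1, real N + 1)"
    proof
      assume "y \<in> U1"
      then obtain x where x: "x \<in> IS" "y \<in> Sq x" unfolding U1_def by blast
      have "0 \<le> fst (snd x)" "fst (snd x) + 1 \<le> int N" "0 \<le> snd (snd x)" "snd (snd x) + 1 \<le> int N"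
        using x(1) by (auto simp: IS_def IN_def)
      then have r: "0 \<le> real_of_int (fst (snd x))" "real_of_int (fst (snd x)) + 1 \<le> real N"
        "0 \<le> real_of_int (snd (snd x))" "real_of_int (snd (snd x)) + 1 \<le> real N"
        by linarith+
      have f: "0 \<le> frac (real (fst x) * fst g)" "frac (real (fst x) * fst g) < 1"
        "0 \<le> frac (real (fst x) * snd g)" "frac (real (fst x) * snd g) < 1"
        by (auto simp: frac_lt_1)
      show ?thesis using x(2) r f sle
        unfolding memSq mem_cbox2 P_def fst_conv snd_conv by linarith

    next
      assume "y \<in> U2"
      then obtain n where n: "n \<in> IN" "y \<in> G n" unfolding U2_def by blast
      have "0 \<le> fst n" "fst n + 1 \<le> int N" "0 \<le> snd n" "snd n + 1 \<le> int N"
        using n(1) by (auto simp: IN_def)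
      then show ?thesis using n(2) sle \<eta>le by (auto simp: memG mem_cbox2)
    qed
  qed
  have "measure lebesgue (U1 \<union> U2) = measure lebesgue U1 + measure lebesgue U2"
    by (rule measure_Union[OF lm_fin[OF U1m] lm_fin[OF U2m] fmeasurableD[OF U1m] fmeasurableD[OF U2m] U12])
  also have "\<dots> = real N * real N + real N * real N * (\<eta> * s)"
    using sB by (simp add: mU1 mU2 algebra_simps)
  finally have eq: "measure lebesgue (U1 \<union> U2) = real N * real N + real N * real N * (\<eta> * s)" .
  have "measure lebesgue (U1 \<union> U2) \<le> measure lebesgue (cbox (-1, -1) (real N + 1, real N + 1))"
    using sub U1m U2m by (intro measure_mono_fmeasurable) auto
  also have "\<dots> = (real N + 2) * (real N + 2)"
    using cbox2_measure[of "-1" "real N + 1" "-1" "real N + 1"] by (simp add: add.commute)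
  finally have "real N * real N + real N * real N * (\<eta> * s) \<le> (real N + 2) * (real N + 2)"
    using eq by simp
  moreover have "real N * (real N * (\<eta> * s)) \<ge> real N * 9"
    using N9 by (intro mult_left_mono) auto
  moreover have "real N \<ge> 1" using N1 by simp
  ultimately show False by (simp only: algebra_simps)
qed

lemma sum_inv_sq: "n \<ge> 2 \<Longrightarrow> (\<Sum>m\<in>{3..n}. 1 / (real m)^2) \<le> 1/2 - 1 / real n"
proof (induction n rule: dec_induct)
  case base then show ?case by simp
next
  case (step n)
  have "{3..Suc n} = insert (Suc n) {3..n}" using step by auto
  then have "(\<Sum>m\<in>{3..Suc n}. 1 / (real m)^2) = 1 / (real (Suc n))^2 + (\<Sum>m\<in>{3..n}. 1 / (real m)^2)"
    by simp
  also have "\<dots> \<le> 1 / (real (Suc n))^2 + (1/2 - 1 / real n)" using step by simp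
  also have "\<dots> \<le> 1/2 - 1 / real (Suc n)"
  proof -
    have n2: "real n \<ge> 2" using step by simp
    have "1 / (real (Suc n))^2 \<le> 1 / (real n * real (Suc n))"
      using n2 by (intro divide_left_mono) (auto simp: power2_eq_square)
    also have "\<dots> = 1 / real n - 1 / real (Suc n)"
      using n2 by (simp add: field_simps)
    finally have "1 / (real (Suc n))^2 \<le> 1 / real n - 1 / real (Suc n)" .
    then show ?thesis by simp
  qed
  finally show ?case .
qed

lemma sum_prime_inv_sq:
  fixes q :: nat
  assumes "PR \<subseteq> {p. prime p \<and> p \<le> q}"
  shows "(\<Sum>p\<in>PR. 1 / (real p)^2) \<le> 3/4"
proof (cases "q \<ge> 2")
  case False
  have "p \<notin> PR" for p
  proof
    assume "p \<in> PR"
    then have "prime p" "p \<le> q" using assms by auto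
    then have "2 \<le> p" using prime_ge_2_nat by blast
    then show False using False \<open>p \<le> q\<close> by simp
  qed
  then have "PR = {}" by blast
  then show ?thesis by simp
next
  case True
  have sub: "PR \<subseteq> insert 2 {3..q}"
  proof
    fix p assume "p \<in> PR"
    then have "prime p" "p \<le> q" using assms by auto
    then have "2 \<le> p" using prime_ge_2_nat by blast
    then show "p \<in> insert 2 {3..q}" using \<open>p \<le> q\<close> by auto
  qed
  have "(\<Sum>p\<in>PR. 1 / (real p)^2) \<le> (\<Sum>p\<in>insert 2 {3..q}. 1 / (real p)^2)"
    by (rule sum_mono2[OF _ sub]) auto
  also have "\<dots> = 1/4 + (\<Sum>p\<in>{3..q}. 1 / (real p)^2)" by simp
  also have "\<dots> \<le> 1/4 + (1/2 - 1 / real q)" using sum_inv_sq[OF True] by simp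
  also have "\<dots> \<le> 3/4" by simp
  finally show ?thesis .
qed

lemma card_residue_le:
  fixes p q B :: nat and c :: int
  assumes p: "prime p" and pq: "p dvd q" and pB: "\<not> p dvd B"
  shows "card {x \<in> {0..<int q}. int p dvd int B * x + c} \<le> q div p"
proof -
  let ?R = "{x \<in> {0..<int q}. int p dvd int B * x + c}"
  have inj: "inj_on (\<lambda>x. nat (x div int p)) ?R"
  proof (rule inj_onI)
    fix x y assume x: "x \<in> ?R" and y: "y \<in> ?R" and e: "nat (x div int p) = nat (y div int p)"
    have p0: "int p > 0" using p prime_gt_0_nat by auto
    have "x div int p = y div int p" using e x y p0 by (simp add: nat_eq_iff pos_imp_zdiv_nonneg_iff)
    have "int p dvd int B * (x - y)"
      using dvd_diff[of "int p" "int B * x + c" "int B * y + c"] x y by (simp add: right_diff_distrib)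
    moreover have "prime (int p)" using p by simp
    moreover have "\<not> int p dvd int B" using pB by simp
    ultimately have "int p dvd x - y" using prime_dvd_mult_iff by blast
    moreover have "x mod int p = y mod int p"
      using \<open>int p dvd x - y\<close> by (simp add: mod_eq_dvd_iff)
    ultimately show "x = y"
      using \<open>x div int p = y div int p\<close> by (metis div_mult_mod_eq)
  qed
  have img: "(\<lambda>x. nat (x div int p)) ` ?R \<subseteq> {0..<q div p}"
  proof
    fix z assume "z \<in> (\<lambda>x. nat (x div int p)) ` ?R"
    then obtain x where x: "x \<in> ?R" "z = nat (x div int p)" by blast
    have p0: "int p > 0" using p prime_gt_0_nat by auto
    obtain t where t: "q = p * t" using pq by blast
    have "x < int p * int t" using x t by simp
    moreover have "int p * (x div int p) \<le> x"
    proof -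
      have "x div int p * int p + x mod int p = x" by (rule div_mult_mod_eq)
      moreover have "x mod int p \<ge> 0" using p0 by simp
      moreover have "int p * (x div int p) = x div int p * int p" by (rule mult.commute)
      ultimately show ?thesis by linarith
    qed
    ultimately have "x div int p < int t"
      using p0 by (meson le_less_trans mult_less_cancel_left_pos)
    moreover have "q div p = t" using t p0 by simp
    ultimately have "x div int p < int (q div p)" by simp
    moreover have "0 \<le> x div int p" using x p0 by (simp add: pos_imp_zdiv_nonneg_iff)
    ultimately show "z \<in> {0..<q div p}" using x by (simp add: nat_less_iff)
  qed
  have "card ?R = card ((\<lambda>x. nat (x div int p)) ` ?R)" using inj by (simp add: card_image)
  also have "\<dots> \<le> card {0..<q div p}" by (rule card_mono[OF _ img]) simp
  finally show ?thesis by simp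
qed

lemma bad_prime:
  fixes B q :: nat and A :: "int \<times> int" and X1 X2 :: int
  assumes B1: "B \<ge> 1" and q1: "q \<ge> 1" and cop: "gcd (gcd (fst A) (snd A)) (int B) = 1"
    and X: "X1 = int B * u1 + fst A" "X2 = int B * u2 + snd A"
    and ng: "gcd3 (X1, X2) (int B * int q) \<noteq> 1"
  shows "\<exists>p. prime p \<and> p dvd q \<and> \<not> p dvd B \<and> int p dvd X1 \<and> int p dvd X2"
proof -
  define x where "x = gcd3 (X1, X2) (int B * int q)"
  have x0: "x \<noteq> 0" using B1 q1 unfolding x_def gcd3_def by simp
  have xge: "x \<ge> 0" unfolding x_def gcd3_def by simp
  have x1: "x \<noteq> 1" using ng x_def by simp
  have xnu: "\<not> is_unit x" using xge x1 by simp
  obtain p where p: "p dvd x" "prime p" using prime_divisor_exists[OF x0 xnu] by blast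
  have xd: "x dvd X1" "x dvd X2" "x dvd int B * int q" unfolding x_def gcd3_def fst_conv snd_conv
    by (rule dvd_trans[OF gcd_dvd1 gcd_dvd1], rule dvd_trans[OF gcd_dvd1 gcd_dvd2], rule gcd_dvd2)
  have pd: "p dvd X1" "p dvd X2" "p dvd int B * int q"
    by (rule dvd_trans[OF p(1) xd(1)], rule dvd_trans[OF p(1) xd(2)], rule dvd_trans[OF p(1) xd(3)])
  have pnB: "\<not> p dvd int B"
  proof
    assume pB: "p dvd int B"
    then have "p dvd int B * u1" "p dvd int B * u2" by auto
    then have "p dvd fst A" "p dvd snd A" using pd X by (simp_all add: dvd_add_right_iff)
    then have "p dvd gcd (gcd (fst A) (snd A)) (int B)" using pB by (simp only: gcd_greatest_iff)
    then have "p dvd 1" using cop by simp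
    then show False using p(2) not_prime_unit by blast
  qed
  have pq: "p dvd int q" using pd(3) pnB p(2) prime_dvd_mult_iff by blast
  have pp: "p > 0" using p(2) prime_gt_0_int by blast
  define pn where "pn = nat p"
  have pe: "int pn = p" using pp by (simp add: pn_def)
  have "prime pn" unfolding pn_def using p(2) by simp
  moreover have "pn dvd q" using pq pe by (metis int_dvd_int_iff)
  moreover have "\<not> pn dvd B" using pnB pe by (metis int_dvd_int_iff)
  moreover have "int pn dvd X1" "int pn dvd X2" using pd pe by simp_all
  ultimately show ?thesis by blast
qed

lemma count_good:
  fixes B q :: nat and A :: "int \<times> int"
  assumes B1: "B \<ge> 1" and q1: "q \<ge> 1" and cop: "gcd (gcd (fst A) (snd A)) (int B) = 1"
  shows "real (card {u \<in> {0..<int q} \<times> {0..<int q}.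
           gcd3 (int B * fst u + fst A, int B * snd u + snd A) (int B * int q) = 1}) \<ge> (real q)^2 / 4"
proof -
  define T where "T = {0..<int q} \<times> {0..<int q}"
  define S where "S = {u \<in> T. gcd3 (int B * fst u + fst A, int B * snd u + snd A) (int B * int q) = 1}"
  define PR where "PR = {p. prime p \<and> p dvd q \<and> \<not> p dvd B}"
  define R where "R p c = {x \<in> {0..<int q}. int p dvd int B * x + c}" for p :: nat and c :: int
  define Bad where "Bad p = R p (fst A) \<times> R p (snd A)" for p
  have finT: "finite T" unfolding T_def by simp
  have finR: "finite (R p c)" for p c unfolding R_def by (rule finite_subset[of _ "{0..<int q}"]) auto
  have PRsub: "PR \<subseteq> {p. prime p \<and> p \<le> q}" using q1 by (auto simp: PR_def dvd_imp_le)
  have finPR: "finite PR" by (rule finite_subset[OF PRsub]) auto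
  have sub: "T - S \<subseteq> (\<Union>p\<in>PR. Bad p)"
  proof
    fix u assume u: "u \<in> T - S"
    then have "gcd3 (int B * fst u + fst A, int B * snd u + snd A) (int B * int q) \<noteq> 1"
      by (auto simp: S_def)
    from bad_prime[OF B1 q1 cop refl refl this] obtain p where
      p: "prime p" "p dvd q" "\<not> p dvd B" "int p dvd int B * fst u + fst A" "int p dvd int B * snd u + snd A"
      by blast
    then show "u \<in> (\<Union>p\<in>PR. Bad p)" using u
      by (auto simp: PR_def Bad_def R_def T_def mem_Times_iff)
  qed
  have cB: "card (Bad p) \<le> (q div p) * (q div p)" if "p \<in> PR" for p
  proof -
    have "card (R p c) \<le> q div p" for c
      unfolding R_def using that by (intro card_residue_le) (auto simp: PR_def)
    then show ?thesis unfolding Bad_def by (simp add: card_cartesian_product mult_le_mono)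
  qed
  have "card (T - S) \<le> card (\<Union>p\<in>PR. Bad p)"
    by (rule card_mono[OF _ sub]) (auto simp: Bad_def finR finPR)
  also have "\<dots> \<le> (\<Sum>p\<in>PR. card (Bad p))" by (rule card_UN_le[OF finPR])
  also have "\<dots> \<le> (\<Sum>p\<in>PR. (q div p) * (q div p))" by (rule sum_mono) (rule cB)
  finally have c1: "real (card (T - S)) \<le> (\<Sum>p\<in>PR. real (q div p) * real (q div p))"
    by (metis (mono_tags, lifting) of_nat_le_iff of_nat_mult of_nat_sum sum.cong)
  have "(\<Sum>p\<in>PR. real (q div p) * real (q div p)) = (\<Sum>p\<in>PR. (real q)^2 * (1 / (real p)^2))"
  proof (rule sum.cong)
    fix p assume "p \<in> PR"
    then have "p dvd q" "p > 0" by (auto simp: PR_def prime_gt_0_nat)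
    then have "real (q div p) = real q / real p" by (simp add: real_of_nat_div)
    then show "real (q div p) * real (q div p) = (real q)^2 * (1 / (real p)^2)"
      by (simp add: power2_eq_square)
  qed simp
  also have "\<dots> = (real q)^2 * (\<Sum>p\<in>PR. 1 / (real p)^2)" by (simp add: sum_distrib_left)
  also have "\<dots> \<le> (real q)^2 * (3/4)"
    using sum_prime_inv_sq[of PR q] PRsub by (intro mult_left_mono) (auto simp: PR_def)
  finally have c2: "real (card (T - S)) \<le> (real q)^2 * (3/4)" using c1 by linarith
  have ST: "S \<subseteq> T" unfolding S_def by auto
  have "card (T - S) = card T - card S" by (rule card_Diff_subset[OF finite_subset[OF ST finT] ST])
  moreover have "card S \<le> card T" using finT ST by (intro card_mono) auto
  moreover have "card T = q * q" unfolding T_def by (simp add: card_cartesian_product)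
  ultimately have "real (card S) = real q * real q - real (card (T - S))" by simp
  then have "real (card S) \<ge> (real q)^2 / 4" using c2 by (simp add: power2_eq_square)
  then show ?thesis by (simp add: S_def T_def)
qed

lemma mnorm_ratpt: "b > 0 \<Longrightarrow> mnorm (g - ratpt a b) =
   max \<bar>real b * fst g - of_int (fst a)\<bar> \<bar>real b * snd g - of_int (snd a)\<bar> / real b"
proof -
  assume b: "b > 0"
  have "\<bar>fst g - of_int (fst a) / real b\<bar> = \<bar>real b * fst g - of_int (fst a)\<bar> / real b"
    using b by (simp add: field_simps abs_div_pos[symmetric] abs_divide)
  moreover have "\<bar>snd g - of_int (snd a) / real b\<bar> = \<bar>real b * snd g - of_int (snd a)\<bar> / real b"
    using b by (simp add: field_simps abs_div_pos[symmetric] abs_divide)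
  ultimately show ?thesis using b by (simp add: mnorm_def ratpt_def max_divide_distrib_right)
qed

lemma bk_set_nonempty:
  fixes g :: "real \<times> real" and B :: nat
  assumes B2: "B \<ge> 2"
  shows "\<exists>b. 1 \<le> b \<and> b < B \<and> (\<exists>a. mnorm (g - ratpt a b) \<le> 1 / (real b * sqrt (real B)))"
proof (cases "B \<le> 4")
  case True
  define a where "a = (round (fst g), round (snd g))"
  have "mnorm (g - ratpt a 1) \<le> 1/2"
    using of_int_round_abs_le[of "fst g"] of_int_round_abs_le[of "snd g"]
    by (simp add: mnorm_def ratpt_def a_def abs_minus_commute)
  moreover have "1/2 \<le> 1 / sqrt (real B)"
  proof -
    have "sqrt (real B) \<le> 2" using True by (intro real_sqrt_le_iff[THEN iffD2, of _ 4, simplified]) simp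
    moreover have "sqrt (real B) > 0" using B2 by simp
    ultimately show ?thesis by (simp add: field_simps)
  qed
  ultimately have "mnorm (g - ratpt a 1) \<le> 1 / (real 1 * sqrt (real B))" by simp
  then show ?thesis using B2 by (intro exI[of _ 1] conjI exI[of _ a]) auto
next
  case False
  show ?thesis
  proof (rule ccontr)
    assume ne: "\<not> ?thesis"
    show False
    proof (rule dirichlet_core[of B g])
      show "B \<ge> 5" using False by simp
      fix c m1 m2 :: int assume c: "1 \<le> c" "c < int B"
      define b where "b = nat c"
      have b: "1 \<le> b" "b < B" "real b = of_int c" using c by (auto simp: b_def)
      have "\<not> mnorm (g - ratpt (m1, m2) b) \<le> 1 / (real b * sqrt (real B))"
      proof
        assume "mnorm (g - ratpt (m1, m2) b) \<le> 1 / (real b * sqrt (real B))"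
        then have "1 \<le> b \<and> b < B \<and> (\<exists>a. mnorm (g - ratpt a b) \<le> 1 / (real b * sqrt (real B)))"
          using b by blast
        then show False using ne by blast
      qed
      then have "max \<bar>real b * fst g - of_int m1\<bar> \<bar>real b * snd g - of_int m2\<bar> / real b > 1 / (real b * sqrt (real B))"
        using mnorm_ratpt[of b g "(m1, m2)"] b by simp
      then have "max \<bar>real b * fst g - of_int m1\<bar> \<bar>real b * snd g - of_int m2\<bar> > 1 / sqrt (real B)"
        using b by (simp add: field_simps)
      then show "max \<bar>of_int c * fst g - of_int m1\<bar> \<bar>of_int c * snd g - of_int m2\<bar> > 1 / sqrt (real B)"
        using b by simp
    qed
  qed
qed

lemma powr_neg_nat: "(2::real) powr (- real k) = 1 / 2 ^ k"
  by (simp add: powr_minus powr_realpow divide_inverse)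

lemma Bk_exists: "\<exists>B::nat. 1 \<le> B \<and> (\<exists>A. mnorm (g - ratpt A B) < 2 powr (- real k))"
proof -
  define B :: nat where "B = 2 ^ k"
  define A where "A = (round (real B * fst g), round (real B * snd g))"
  have B0: "B > 0" by (simp add: B_def)
  have "mnorm (g - ratpt A B) = max \<bar>real B * fst g - of_int (fst A)\<bar> \<bar>real B * snd g - of_int (snd A)\<bar> / real B"
    by (rule mnorm_ratpt[OF B0])
  also have "\<dots> \<le> (1/2) / real B"
    using of_int_round_abs_le[of "real B * fst g"] of_int_round_abs_le[of "real B * snd g"] B0
    by (intro divide_right_mono) (auto simp: A_def abs_minus_commute)
  also have "\<dots> < 1 / real B" using B0 by (simp add: field_simps)
  also have "\<dots> = 2 powr (- real k)" by (simp add: B_def powr_neg_nat)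
  finally have "mnorm (g - ratpt A B) < 2 powr (- real k)" .
  moreover have "1 \<le> B" using B0 by simp
  ultimately show ?thesis by blast
qed

lemma Bk_prop:
  "1 \<le> Bk g k \<and> (\<exists>A. mnorm (g - ratpt A (Bk g k)) < 2 powr (- real k))"
  unfolding Bk_def by (rule LeastI_ex[OF Bk_exists])

lemma Bk_min:
  assumes "1 \<le> B" "B < Bk g k" shows "\<not> (\<exists>A. mnorm (g - ratpt A B) < 2 powr (- real k))"
  using not_less_Least[OF assms(2)[unfolded Bk_def]] assms(1) by blast

lemma bk_prop:
  assumes "2 \<le> Bk g k"
  shows "1 \<le> bk g k \<and> bk g k < Bk g k \<and> (\<exists>a. mnorm (g - ratpt a (bk g k)) \<le> 1 / (real (bk g k) * sqrt (real (Bk g k))))"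
  unfolding bk_def by (rule LeastI_ex[OF bk_set_nonempty[OF assms]])

lemma bk_min:
  assumes "1 \<le> b" "b < bk g k" "b < Bk g k"
  shows "\<not> (\<exists>a. mnorm (g - ratpt a b) \<le> 1 / (real b * sqrt (real (Bk g k))))"
  using not_less_Least[OF assms(2)[unfolded bk_def]] assms(1,3) by blast

lemma reduce_frac:
  fixes n :: nat and a :: "int \<times> int"
  assumes n1: "1 \<le> n" and d1: "gcd (gcd (fst a) (snd a)) (int n) \<noteq> 1"
  shows "\<exists>n' a'. 1 \<le> n' \<and> n' < n \<and> ratpt a' n' = ratpt a n"
proof -
  define d where "d = gcd (gcd (fst a) (snd a)) (int n)"
  have d0: "d \<ge> 0" by (simp add: d_def)
  have dn0: "d \<noteq> 0" using n1 by (simp add: d_def)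
  have d2: "d \<ge> 2" using d0 dn0 d1 d_def by linarith
  have dvn: "d dvd int n" by (simp add: d_def)
  have dv1: "d dvd fst a" "d dvd snd a" unfolding d_def
    by (rule dvd_trans[OF gcd_dvd1 gcd_dvd1], rule dvd_trans[OF gcd_dvd1 gcd_dvd2])
  obtain m where m: "int n = d * m" using dvn by blast
  obtain a1 where a1: "fst a = d * a1" using dv1(1) by blast
  obtain a2 where a2: "snd a = d * a2" using dv1(2) by blast
  have "0 < d * m" using m n1 by simp
  then have m0: "m > 0" using d2 by (simp add: zero_less_mult_iff)
  have mn: "m < int n" using m d2 m0 by (simp add: mult_less_cancel_right1)
  define n' where "n' = nat m"
  have n'1: "1 \<le> n'" using m0 by (simp add: n'_def)
  have n'n: "n' < n" using mn m0 by (simp add: n'_def)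
  have e1: "real n = of_int (int n)" by simp
  have e2: "of_int m = real n'" using m0 by (simp add: n'_def)
  have rn: "real n = of_int d * real n'" unfolding e1 m e2[symmetric] by simp
  have "ratpt (a1, a2) n' = ratpt a n"
    using dn0 rn by (simp add: ratpt_def a1 a2 field_simps)
  then show ?thesis using n'1 n'n by blast
qed

lemma Bk_coprime:
  assumes A: "mnorm (g - ratpt A (Bk g k)) < 2 powr (- real k)"
  shows "gcd (gcd (fst A) (snd A)) (int (Bk g k)) = 1"
proof (rule ccontr)
  assume "gcd (gcd (fst A) (snd A)) (int (Bk g k)) \<noteq> 1"
  from reduce_frac[OF conjunct1[OF Bk_prop] this] obtain n' a' where
    n': "1 \<le> n'" "n' < Bk g k" "ratpt a' n' = ratpt A (Bk g k)" by blast
  then have "mnorm (g - ratpt a' n') < 2 powr (- real k)" using A by simp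
  then show False using Bk_min[OF n'(1,2)] by blast
qed

lemma bk_coprime:
  assumes B2: "2 \<le> Bk g k" and a: "mnorm (g - ratpt a (bk g k)) \<le> 1 / (real (bk g k) * sqrt (real (Bk g k)))"
  shows "gcd (gcd (fst a) (snd a)) (int (bk g k)) = 1"
proof (rule ccontr)
  assume "gcd (gcd (fst a) (snd a)) (int (bk g k)) \<noteq> 1"
  from reduce_frac[OF conjunct1[OF bk_prop[OF B2]] this] obtain n' a' where
    n': "1 \<le> n'" "n' < bk g k" "ratpt a' n' = ratpt a (bk g k)" by blast
  have "1 / (real (bk g k) * sqrt (real (Bk g k))) \<le> 1 / (real n' * sqrt (real (Bk g k)))"
    using n' B2 by (intro divide_left_mono mult_pos_pos mult_right_mono) auto
  then have "mnorm (g - ratpt a' n') \<le> 1 / (real n' * sqrt (real (Bk g k)))" using a n' by simp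
  moreover have "n' < Bk g k" using n'(2) bk_prop[OF B2] by linarith
  ultimately show False using bk_min[OF n'(1,2)] by blast
qed

lemma kidx_eq:
  assumes "2 powr (- real k) < \<psi> q" "\<psi> q \<le> 2 powr (1 - real k)"
  shows "kidx \<psi> q = k"
  unfolding kidx_def
proof (rule the_equality)
  show "2 powr (- real k) < \<psi> q \<and> \<psi> q \<le> 2 powr (1 - real k)" using assms by simp
next
  fix k' assume k': "2 powr (- real k') < \<psi> q \<and> \<psi> q \<le> 2 powr (1 - real k')"
  show "k' = k"
  proof (rule ccontr)
    assume "k' \<noteq> k"
    then consider "k' < k" | "k < k'" by linarith
    then show False
    proof cases
      case 1
      then have "2 powr (1 - real k) \<le> 2 powr (- real k')" by simp
      then show ?thesis using assms k' by linarith
    next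
      case 2
      then have "2 powr (1 - real k') \<le> 2 powr (- real k)" by simp
      then show ?thesis using assms k' by linarith
    qed
  qed
qed

lemma setting_k_ge:
  assumes S: "setting g \<sigma> A a K0 \<psi>" and k: "2 powr (- real k) < \<psi> q"
  shows "K0 \<le> k"
proof -
  have "\<psi> q < 2 powr (1 - real K0)" using S by (simp add: setting_def)
  then have "2 powr (- real k) < 2 powr (1 - real K0)" using k by linarith
  then have "- real k < 1 - real K0" by simp
  then show ?thesis by linarith
qed

lemma card_Sq:
  assumes S: "setting g \<sigma> A a K0 \<psi>" and q1: "q \<ge> 1"
    and k1: "2 powr (- real k) < \<psi> q" and k2: "\<psi> q \<le> 2 powr (1 - real k)"
  shows "real (card (Sq g \<sigma> A a \<psi> q)) \<ge> (real q)^2 / 4"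
proof -
  have kk: "kidx \<psi> q = k" using k1 k2 by (intro kidx_eq)
  show ?thesis
  proof (cases "real (Bk g k) \<le> 2 powr (\<sigma> * real k)")
    case True
    have "Sq g \<sigma> A a \<psi> q = {u \<in> {0..<int q} \<times> {0..<int q}.
          gcd3 (int (Bk g k) * fst u + fst (A k), int (Bk g k) * snd u + snd (A k)) (int (Bk g k) * int q) = 1}"
      using True by (simp add: Sq_def kk Let_def)
    moreover have "gcd (gcd (fst (A k)) (snd (A k))) (int (Bk g k)) = 1"
      using S by (intro Bk_coprime) (simp add: setting_def)
    ultimately show ?thesis using count_good[of "Bk g k" q "A k"] Bk_prop[of g k] q1 by simp
  next
    case False
    have B2: "2 \<le> Bk g k" using S setting_k_ge[OF S k1] by (simp add: setting_def)
    have "Sq g \<sigma> A a \<psi> q = {u \<in> {0..<int q} \<times> {0..<int q}.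
          gcd3 (int (bk g k) * fst u + fst (a k), int (bk g k) * snd u + snd (a k)) (int (bk g k) * int q) = 1}"
      using False by (simp add: Sq_def kk Let_def)
    moreover have "gcd (gcd (fst (a k)) (snd (a k))) (int (bk g k)) = 1"
      using S B2 by (intro bk_coprime) (simp_all add: setting_def)
    ultimately show ?thesis using count_good[of "bk g k" q "a k"] bk_prop[OF B2] q1 by simp
  qed
qed

lemma Sq_sub: "Sq g \<sigma> A a \<psi> q \<subseteq> {0..<int q} \<times> {0..<int q}"
  unfolding Sq_def Let_def by auto

lemma Eq_sets: "Eq' g \<sigma> A a \<psi> q \<in> lmeasurable"
proof -
  define Op where "Op = (\<Union>u\<in>{u. (fst u mod int q, snd u mod int q) \<in> Sq g \<sigma> A a \<psi> q}.
        {x. mnorm (real q *\<^sub>R x - ivec u - g) < \<psi> q})"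
  have "open Op" unfolding Op_def
    by (intro open_UN ballI open_Collect_less) (auto simp: mnorm_def intro!: continuous_intros)
  have eq: "Eq' g \<sigma> A a \<psi> q = (if 0 < \<psi> q then cbox (0,0) (1,1) \<inter> Op else {})"
    unfolding Eq'_def Op_def by (auto simp: mem_cbox2) blast+
  have "Eq' g \<sigma> A a \<psi> q \<in> sets lebesgue"
    unfolding eq using \<open>open Op\<close> by (auto intro!: sets.Int borel_open borel_closed)
  moreover have "Eq' g \<sigma> A a \<psi> q \<subseteq> cbox (0,0) (1,1)" unfolding eq by auto
  ultimately show ?thesis by (intro fmeasurableI2[OF lmeasurable_cbox]) auto
qed

definition qlo :: "real \<Rightarrow> real \<Rightarrow> real" where
  "qlo t w = (if t \<le> 1/2 then t else t - w)"

lemma qlo_coord: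
  assumes "0 \<le> t" "t < 1" "0 < w" "w \<le> 1/2" "qlo t w < y" "y < qlo t w + w"
  shows "0 \<le> y \<and> y \<le> 1 \<and> \<bar>y - t\<bar> < w"
  using assms unfolding qlo_def by (auto split: if_splits)

lemma round_coord:
  fixes s :: int and q :: nat and gi :: real
  assumes q1: "q \<ge> 1" and s: "0 \<le> s" "s < int q"
  defines "u \<equiv> s - int q * floor ((of_int s + gi) / real q)"
  shows "u mod int q = s" "(of_int u + gi) / real q = frac ((of_int s + gi) / real q)"
proof -
  have "u = s + (- floor ((of_int s + gi) / real q)) * int q" unfolding u_def by simp
  then have "u mod int q = s mod int q" by (simp only: mod_mult_self1)
  then show "u mod int q = s" using s by simp
  show "(of_int u + gi) / real q = frac ((of_int s + gi) / real q)"
    unfolding u_def frac_def using q1 by (simp add: field_simps)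
qed

lemma E_lower:
  assumes S: "setting g \<sigma> A a K0 \<psi>" and q1: "q \<ge> 1"
    and k1: "2 powr (- real k) < \<psi> q" and k2: "\<psi> q \<le> 2 powr (1 - real k)"
  shows "measure lebesgue (Eq' g \<sigma> A a \<psi> q) \<ge> (\<psi> q)^2 / 4"
proof -
  let ?S = "Sq g \<sigma> A a \<psi> q"
  let ?E = "Eq' g \<sigma> A a \<psi> q"
  have \<psi>0: "0 < \<psi> q" using k1 by (metis le_less_trans powr_ge_zero)
  have \<psi>h: "\<psi> q \<le> 1/2" using S by (simp add: setting_def)
  define w where "w = \<psi> q / real q"
  have w0: "0 < w" using \<psi>0 q1 by (simp add: w_def)
  have wh: "w \<le> 1/2"
  proof -
    have "w \<le> \<psi> q" unfolding w_def using \<psi>0 q1 by (simp add: divide_le_eq)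
    then show ?thesis using \<psi>h by linarith
  qed
  have qw: "real q * w = \<psi> q" using q1 by (simp add: w_def)
  define U where "U s = (fst s - int q * floor ((of_int (fst s) + fst g) / real q),
                         snd s - int q * floor ((of_int (snd s) + snd g) / real q))" for s :: "int \<times> int"
  define c where "c s = ((of_int (fst (U s)) + fst g) / real q, (of_int (snd (U s)) + snd g) / real q)" for s
  define Qb where "Qb s = box (qlo (fst (c s)) w, qlo (snd (c s)) w) (qlo (fst (c s)) w + w, qlo (snd (c s)) w + w)" for s
  have Umod: "fst (U s) mod int q = fst s" "snd (U s) mod int q = snd s" if "s \<in> ?S" for s
    using that Sq_sub[of g \<sigma> A a \<psi> q] round_coord(1)[OF q1] by (auto simp: U_def)
  have crange: "0 \<le> fst (c s)" "fst (c s) < 1" "0 \<le> snd (c s)" "snd (c s) < 1" if "s \<in> ?S" for s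
    using that Sq_sub[of g \<sigma> A a \<psi> q] round_coord(2)[OF q1] by (auto simp: U_def c_def frac_lt_1)
  have inQ: "0 \<le> fst x \<and> fst x \<le> 1 \<and> \<bar>fst x - fst (c s)\<bar> < w \<and> 0 \<le> snd x \<and> snd x \<le> 1 \<and> \<bar>snd x - snd (c s)\<bar> < w"
    if "s \<in> ?S" "x \<in> Qb s" for s x
  proof -
    have b: "qlo (fst (c s)) w < fst x" "fst x < qlo (fst (c s)) w + w"
            "qlo (snd (c s)) w < snd x" "snd x < qlo (snd (c s)) w + w"
      using that(2) by (auto simp: Qb_def mem_box2)
    show ?thesis using qlo_coord[OF crange(1,2)[OF that(1)] w0 wh b(1,2)]
      qlo_coord[OF crange(3,4)[OF that(1)] w0 wh b(3,4)] by blast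
  qed
  have dist: "\<bar>real q * fst x - of_int (fst (U s)) - fst g\<bar> < \<psi> q \<and> \<bar>real q * snd x - of_int (snd (U s)) - snd g\<bar> < \<psi> q"
    if "s \<in> ?S" "x \<in> Qb s" for s x
  proof -
    have h: "\<bar>fst x - fst (c s)\<bar> < w" "\<bar>snd x - snd (c s)\<bar> < w" using inQ[OF that] by auto
    have e1: "real q * fst x - of_int (fst (U s)) - fst g = real q * (fst x - fst (c s))"
      using q1 by (simp add: c_def field_simps)
    have e2: "real q * snd x - of_int (snd (U s)) - snd g = real q * (snd x - snd (c s))"
      using q1 by (simp add: c_def field_simps)
    have "\<bar>real q * (fst x - fst (c s))\<bar> < real q * w" "\<bar>real q * (snd x - snd (c s))\<bar> < real q * w"
      using h q1 by (simp_all add: abs_mult)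
    then show ?thesis using e1 e2 qw by simp
  qed
  have sub: "Qb s \<subseteq> ?E" if "s \<in> ?S" for s
  proof
    fix x assume x: "x \<in> Qb s"
    have "(fst (U s) mod int q, snd (U s) mod int q) \<in> ?S" using Umod[OF that] that by simp
    moreover have "mnorm (real q *\<^sub>R x - ivec (U s) - g) < \<psi> q"
      using dist[OF that x] by (simp add: mnorm_def ivec_def)
    ultimately show "x \<in> ?E" using inQ[OF that x] \<psi>0 unfolding Eq'_def by blast
  qed
  have disj: "disjoint_family_on Qb ?S"
  proof (unfold disjoint_family_on_def, intro ballI impI)
    fix s s' assume s: "s \<in> ?S" and s': "s' \<in> ?S" and ne: "s \<noteq> s'"
    show "Qb s \<inter> Qb s' = {}"
    proof (rule ccontr)
      assume "Qb s \<inter> Qb s' \<noteq> {}"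
      then obtain x where x: "x \<in> Qb s" "x \<in> Qb s'" by blast
      have d1: "\<bar>of_int (fst (U s) - fst (U s')) :: real\<bar> < 1" "\<bar>of_int (snd (U s) - snd (U s')) :: real\<bar> < 1"
        using dist[OF s x(1)] dist[OF s' x(2)] \<psi>h by auto
      have "fst (U s) = fst (U s')" "snd (U s) = snd (U s')" using d1 by (auto dest: abs_lt1_int)
      then have "fst s = fst s'" "snd s = snd s'" using Umod[OF s] Umod[OF s'] by metis+
      then show False using ne by (simp add: prod_eq_iff)
    qed
  qed
  have finS: "finite ?S" by (rule finite_subset[OF Sq_sub]) auto
  have mQ: "measure lebesgue (Qb s) = w * w" for s
    unfolding Qb_def using box2_measure[of "qlo (fst (c s)) w" "qlo (fst (c s)) w + w" "qlo (snd (c s)) w" "qlo (snd (c s)) w + w"] w0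
    by simp
  have Qm: "Qb s \<in> lmeasurable" for s unfolding Qb_def by simp
  have Qf: "emeasure lebesgue (Qb s) \<noteq> \<infinity>" for s by (rule lm_fin[OF Qm])
  have "measure lebesgue (\<Union>s\<in>?S. Qb s) = (\<Sum>s\<in>?S. measure lebesgue (Qb s))"
    by (rule measure_finite_Union[OF finS _ disj Qf]) (use Qm in auto)
  also have "\<dots> = real (card ?S) * (w * w)" by (simp add: mQ)
  finally have mU: "measure lebesgue (\<Union>s\<in>?S. Qb s) = real (card ?S) * (w * w)" .
  have "measure lebesgue (\<Union>s\<in>?S. Qb s) \<le> measure lebesgue ?E"
    using sub Qm finS by (intro measure_mono_fmeasurable Eq_sets) auto
  moreover have "real (card ?S) * (w * w) \<ge> (real q)^2 / 4 * (w * w)"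
    using card_Sq[OF S q1 k1 k2] by (intro mult_right_mono) auto
  moreover have "(real q)^2 / 4 * (w * w) = (\<psi> q)^2 / 4"
    using q1 by (simp add: w_def power2_eq_square field_simps)
  ultimately show ?thesis using mU by linarith
qed

lemma int_interval_card:
  fixes a b :: real
  assumes "a \<le> b"
  shows "real (card {k::int. a < of_int k \<and> of_int k < b}) \<le> b - a + 1"
proof -
  have sub: "{k::int. a < of_int k \<and> of_int k < b} \<subseteq> {floor a + 1 .. ceiling b - 1}"
  proof
    fix k :: int assume "k \<in> {k::int. a < of_int k \<and> of_int k < b}"
    then have "a < of_int k" "of_int k < b" by auto
    then have "floor a < k" "k < ceiling b" by (simp_all add: floor_less_iff less_ceiling_iff)
    then show "k \<in> {floor a + 1 .. ceiling b - 1}" by simp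
  qed
  have "card {k::int. a < of_int k \<and> of_int k < b} \<le> card {floor a + 1 .. ceiling b - 1}"
    by (rule card_mono[OF _ sub]) simp
  also have "\<dots> = nat (ceiling b - 1 - floor a)" by simp
  finally have "real (card {k::int. a < of_int k \<and> of_int k < b}) \<le> real (nat (ceiling b - 1 - floor a))"
    by simp
  also have "\<dots> \<le> b - a + 1"
  proof -
    have c1: "of_int (ceiling b) < b + 1" "a - 1 < of_int (floor a)" by linarith+
    show ?thesis
    proof (cases "ceiling b - 1 - floor a \<ge> 0")
      case True
      then have "real (nat (ceiling b - 1 - floor a)) = of_int (ceiling b) - 1 - of_int (floor a)" by simp
      then show ?thesis using c1 by linarith
    next
      case False
      then show ?thesis using assms by simp
    qed
  qed
  finally show ?thesis .
qed

lemma residue_card: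
  fixes m :: nat and r w :: int and x0 L :: real
  assumes m1: "m \<ge> 1" and cop: "coprime (int m) r" and L0: "L \<ge> 0"
  shows "real (card {u::int. x0 < of_int u \<and> of_int u < x0 + L \<and> int m dvd r * u - w}) \<le> L / real m + 1"
proof (cases "{u::int. x0 < of_int u \<and> of_int u < x0 + L \<and> int m dvd r * u - w} = {}")
  case True
  have "L / real m \<ge> 0" using L0 by simp
  then show ?thesis by (simp only: True card.empty of_nat_0)
next
  case False
  let ?R = "{u::int. x0 < of_int u \<and> of_int u < x0 + L \<and> int m dvd r * u - w}"
  obtain u0 where u0: "u0 \<in> ?R" using False by blast
  have m0: "int m > 0" using m1 by simp
  have cong: "int m dvd u - u0" if "u \<in> ?R" for u
  proof -
    have "int m dvd r * u - w" "int m dvd r * u0 - w" using that u0 by auto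
    then have "int m dvd (r * u - w) - (r * u0 - w)" by (rule dvd_diff)
    then have "int m dvd r * (u - u0)" by (simp add: algebra_simps)
    then show ?thesis using cop by (simp add: coprime_dvd_mult_right_iff)
  qed
  define f where "f u = (u - u0) div int m" for u
  have inj: "inj_on f ?R"
  proof (rule inj_onI)
    fix u u' assume u: "u \<in> ?R" and u': "u' \<in> ?R" and e: "f u = f u'"
    have "u - u0 = f u * int m" "u' - u0 = f u' * int m"
      using cong[OF u] cong[OF u'] by (simp_all add: f_def)
    then show "u = u'" using e by simp
  qed
  have img: "f ` ?R \<subseteq> {k::int. (x0 - of_int u0) / real m < of_int k \<and> of_int k < (x0 + L - of_int u0) / real m}"
  proof
    fix k assume "k \<in> f ` ?R"
    then obtain u where u: "u \<in> ?R" "k = f u" by blast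
    have e: "of_int u - of_int u0 = real m * of_int k"
    proof -
      have "u - u0 = k * int m" using cong[OF u(1)] u(2) by (simp add: f_def)
      then have "(of_int (u - u0) :: real) = of_int (k * int m)" by simp
      then show ?thesis by (simp add: algebra_simps)
    qed
    have "x0 - of_int u0 < real m * of_int k" "real m * of_int k < x0 + L - of_int u0"
      using u(1) e by auto
    then show "k \<in> {k::int. (x0 - of_int u0) / real m < of_int k \<and> of_int k < (x0 + L - of_int u0) / real m}"
      using m1 by (simp add: field_simps)
  qed
  have "card ?R = card (f ` ?R)" using inj by (simp add: card_image)
  also have "\<dots> \<le> card {k::int. (x0 - of_int u0) / real m < of_int k \<and> of_int k < (x0 + L - of_int u0) / real m}"
  proof (rule card_mono[OF _ img])
    have "{k::int. (x0 - of_int u0) / real m < of_int k \<and> of_int k < (x0 + L - of_int u0) / real m}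
        \<subseteq> {floor ((x0 - of_int u0) / real m) .. ceiling ((x0 + L - of_int u0) / real m)}"
      by (auto simp: floor_le_iff le_ceiling_iff less_imp_le)
    then show "finite {k::int. (x0 - of_int u0) / real m < of_int k \<and> of_int k < (x0 + L - of_int u0) / real m}"
      by (rule finite_subset) simp
  qed
  finally have "real (card ?R) \<le> real (card {k::int. (x0 - of_int u0) / real m < of_int k \<and> of_int k < (x0 + L - of_int u0) / real m})"
    by simp
  also have "\<dots> \<le> (x0 + L - of_int u0) / real m - (x0 - of_int u0) / real m + 1"
    using L0 m1 by (intro int_interval_card) (simp add: divide_right_mono)
  also have "\<dots> = L / real m + 1" using m1 by (simp add: field_simps)
  finally show ?thesis .
qed

lemma fin_int_interval:
  fixes a b :: real shows "finite {k::int. a < of_int k \<and> of_int k < b}"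
proof -
  have "{k::int. a < of_int k \<and> of_int k < b} \<subseteq> {floor a .. ceiling b}"
    by (auto simp: floor_le_iff le_ceiling_iff less_imp_le)
  then show ?thesis by (rule finite_subset) simp
qed

lemma pair_count:
  fixes qq rr :: nat and x0 L t D :: real
  assumes q1: "qq \<ge> 1" and cop: "coprime qq rr" and L0: "L \<ge> 0" and D0: "D > 0"
  shows "real (card {p::int\<times>int. x0 < of_int (fst p) \<and> of_int (fst p) < x0 + L \<and>
            \<bar>real rr * of_int (fst p) - real qq * of_int (snd p) - t\<bar> < D}) \<le> (2 * D + 1) * (L / real qq + 1)
   \<and> finite {p::int\<times>int. x0 < of_int (fst p) \<and> of_int (fst p) < x0 + L \<and>
            \<bar>real rr * of_int (fst p) - real qq * of_int (snd p) - t\<bar> < D}"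
proof -
  let ?P = "{p::int\<times>int. x0 < of_int (fst p) \<and> of_int (fst p) < x0 + L \<and>
            \<bar>real rr * of_int (fst p) - real qq * of_int (snd p) - t\<bar> < D}"
  define W where "W = {w::int. t - D < of_int w \<and> of_int w < t + D}"
  define R where "R w = {u::int. x0 < of_int u \<and> of_int u < x0 + L \<and> int qq dvd int rr * u - w}" for w
  define F where "F w = (\<lambda>u. (u, (int rr * u - w) div int qq)) ` R w" for w
  have finW: "finite W" unfolding W_def by (rule fin_int_interval)
  have finR: "finite (R w)" for w
    by (rule finite_subset[OF _ fin_int_interval[of x0 "x0 + L"]]) (auto simp: R_def)
  have sub: "?P \<subseteq> (\<Union>w\<in>W. F w)"
  proof
    fix p assume p: "p \<in> ?P"
    define w where "w = int rr * fst p - int qq * snd p"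
    have "of_int w = real rr * of_int (fst p) - real qq * of_int (snd p)" by (simp add: w_def)
    then have wW: "w \<in> W" using p by (auto simp: W_def abs_less_iff)
    have dv: "int rr * fst p - w = int qq * snd p" by (simp add: w_def)
    have fR: "fst p \<in> R w" using p dv by (auto simp: R_def)
    have "(int rr * fst p - w) div int qq = snd p" using dv q1 by simp
    have "(fst p, (int rr * fst p - w) div int qq) \<in> F w" unfolding F_def using fR by (rule imageI)
    then have "p \<in> F w" using \<open>(int rr * fst p - w) div int qq = snd p\<close> by simp
    then show "p \<in> (\<Union>w\<in>W. F w)" using wW by blast
  qed
  have finP: "finite ?P"
    by (rule finite_subset[OF sub]) (auto simp: F_def finW finR)
  have "card ?P \<le> card (\<Union>w\<in>W. F w)"
    by (rule card_mono[OF _ sub]) (auto simp: F_def finW finR)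
  also have "\<dots> \<le> (\<Sum>w\<in>W. card (F w))" by (rule card_UN_le[OF finW])
  also have "\<dots> \<le> (\<Sum>w\<in>W. card (R w))" unfolding F_def by (intro sum_mono card_image_le finR)
  finally have c1: "real (card ?P) \<le> (\<Sum>w\<in>W. real (card (R w)))"
    by (simp only: of_nat_sum[symmetric] of_nat_le_iff)
  have "coprime (int qq) (int rr)" using cop by simp
  then have "real (card (R w)) \<le> L / real qq + 1" for w
    unfolding R_def using residue_card[OF q1 _ L0] by blast
  then have "(\<Sum>w\<in>W. real (card (R w))) \<le> real (card W) * (L / real qq + 1)"
    using sum_mono[of W "\<lambda>w. real (card (R w))" "\<lambda>w. L / real qq + 1"] by simp
  also have "\<dots> \<le> (2 * D + 1) * (L / real qq + 1)"
  proof (rule mult_right_mono)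
    show "real (card W) \<le> 2 * D + 1"
      unfolding W_def using int_interval_card[of "t - D" "t + D"] D0 by simp
    show "0 \<le> L / real qq + 1" using L0 by simp
  qed
  finally show ?thesis using c1 finP by linarith
qed

lemma gdiv_facts:
  fixes q r :: nat
  assumes q1: "q \<ge> 1" and r1: "r \<ge> 1"
  shows "real (q div gcd q r) = real q / real (gcd q r)"
    and "real (r div gcd q r) = real r / real (gcd q r)"
    and "real (gcd q r) > 0"
    and "q div gcd q r \<ge> 1" and "r div gcd q r \<ge> 1"
    and "coprime (q div gcd q r) (r div gcd q r)"
proof -
  show "real (q div gcd q r) = real q / real (gcd q r)" by (simp add: real_of_nat_div)
  show "real (r div gcd q r) = real r / real (gcd q r)" by (simp add: real_of_nat_div)
  show "real (gcd q r) > 0" using q1 by simp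
  have "gcd q r \<le> q" "gcd q r \<le> r" "0 < gcd q r" using q1 r1 by (simp_all add: gcd_le1_nat gcd_le2_nat)
  then have "0 < q div gcd q r" "0 < r div gcd q r" by (simp_all add: div_greater_zero_iff)
  then show "q div gcd q r \<ge> 1" "r div gcd q r \<ge> 1" by simp_all
  show "coprime (q div gcd q r) (r div gcd q r)" using q1 by (intro div_gcd_coprime) auto
qed

lemma lin_comb:
  fixes q r :: nat and u v :: int and x gi pq pr :: real
  assumes q1: "q \<ge> 1" and r1: "r \<ge> 1"
    and hu: "\<bar>real q * x - of_int u - gi\<bar> < pq" and hv: "\<bar>real r * x - of_int v - gi\<bar> < pr"
  shows "\<bar>real (r div gcd q r) * of_int u - real (q div gcd q r) * of_int v
           - (real (q div gcd q r) - real (r div gcd q r)) * gi\<bar>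
         < max (2 * pq / real q) (2 * pr / real r) * real q * real r / real (gcd q r)"
proof -
  define g where "g = real (gcd q r)"
  define rr where "rr = real (r div gcd q r)"
  define qq where "qq = real (q div gcd q r)"
  have g0: "g > 0" using gdiv_facts[OF q1 r1] by (simp add: g_def)
  have rr: "rr = real r / g" and qq: "qq = real q / g" using gdiv_facts[OF q1 r1] by (simp_all add: rr_def qq_def g_def)
  have rr0: "rr > 0" "qq > 0" using g0 q1 r1 by (simp_all add: rr qq)
  have e: "rr * of_int u - qq * of_int v - (qq - rr) * gi = qq * (real r * x - of_int v - gi) - rr * (real q * x - of_int u - gi)"
    using g0 by (simp add: rr qq field_simps)
  have "\<bar>qq * (real r * x - of_int v - gi) - rr * (real q * x - of_int u - gi)\<bar>
        \<le> qq * \<bar>real r * x - of_int v - gi\<bar> + rr * \<bar>real q * x - of_int u - gi\<bar>"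
    using rr0 by (simp add: abs_triangle_ineq4[THEN order_trans] abs_mult)
  also have "\<dots> < qq * pr + rr * pq"
    using rr0 hu hv by (intro add_strict_mono mult_strict_left_mono) auto
  also have "\<dots> = real q * real r / g * (pq / real q + pr / real r)"
    using q1 r1 g0 by (simp add: rr qq field_simps)
  also have "\<dots> \<le> max (2 * pq / real q) (2 * pr / real r) * real q * real r / g"
  proof -
    have "2 * pq / real q = 2 * (pq / real q)" "2 * pr / real r = 2 * (pr / real r)" by simp_all
    then have "pq / real q + pr / real r \<le> max (2 * pq / real q) (2 * pr / real r)"
      by linarith
    then have "real q * real r / g * (pq / real q + pr / real r) \<le> real q * real r / g * max (2 * pq / real q) (2 * pr / real r)"
      using g0 by (intro mult_left_mono) auto
    then show ?thesis by (simp add: field_simps)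
  qed
  finally have "\<bar>rr * of_int u - qq * of_int v - (qq - rr) * gi\<bar> < max (2 * pq / real q) (2 * pr / real r) * real q * real r / g"
    by (simp only: e)
  then show ?thesis by (simp only: rr_def qq_def g_def)
qed

lemma Eq_mem:
  assumes "x \<in> Eq' g \<sigma> A a \<psi> q"
  shows "0 \<le> fst x \<and> fst x \<le> 1 \<and> 0 \<le> snd x \<and> snd x \<le> 1 \<and> 0 < \<psi> q \<and>
    (\<exists>u. (fst u mod int q, snd u mod int q) \<in> Sq g \<sigma> A a \<psi> q \<and>
         \<bar>real q * fst x - of_int (fst u) - fst g\<bar> < \<psi> q \<and> \<bar>real q * snd x - of_int (snd u) - snd g\<bar> < \<psi> q)"
  using assms unfolding Eq'_def by (auto simp: mnorm_def ivec_def)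

lemma u_range:
  fixes q :: nat and u :: int and x gi p :: real
  assumes "0 \<le> x" "x \<le> 1" "p \<le> 1/2" "\<bar>real q * x - of_int u - gi\<bar> < p"
  shows "- gi - 1/2 < of_int u \<and> of_int u < - gi - 1/2 + (real q + 1)"
proof -
  have "0 \<le> real q * x" "real q * x \<le> real q" using assms(1,2)
    by (simp_all add: mult_left_le)
  then show ?thesis using assms(3,4) by (auto simp: abs_less_iff)
qed

lemma box_coord:
  fixes x c c' a b :: real
  assumes "\<bar>x - c\<bar> < a" "\<bar>x - c'\<bar> < b"
  shows "max (c - a) (c' - b) \<le> x \<and> x \<le> max (c - a) (c' - b) + min (2 * a) (2 * b)"
  using assms by (auto simp: abs_less_iff max_def min_def)

lemma E_upper:
  fixes q r :: nat
  assumes q1: "q \<ge> 1" and r1: "r \<ge> 1"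
    and pq: "0 < \<psi> q" "\<psi> q \<le> 1/2" and pr: "0 < \<psi> r" "\<psi> r \<le> 1/2"
    and \<Delta>: "\<Delta> = max (2 * \<psi> q / real q) (2 * \<psi> r / real r)"
    and \<delta>: "\<delta> = min (2 * \<psi> q / real q) (2 * \<psi> r / real r)"
    and gg: "gg = real (gcd q r)" and D: "D = \<Delta> * real q * real r / gg"
  shows "measure lebesgue (Eq' g \<sigma> A a \<psi> q \<inter> Eq' g \<sigma> A a \<psi> r) \<le> 72 * (\<delta>\<^sup>2 * gg\<^sup>2 * (D\<^sup>2 + 1))"
proof -
  define qq where "qq = q div gcd q r"
  define rr where "rr = r div gcd q r"
  define h where "h = real qq - real rr"
  have gf: "real qq = real q / gg" "real rr = real r / gg" "gg > 0" "qq \<ge> 1" "rr \<ge> 1" "coprime qq rr"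
    using gdiv_facts[OF q1 r1] by (simp_all add: qq_def rr_def gg)
  have g1: "gg \<ge> 1" using q1 by (simp add: gg Suc_le_eq)
  have \<Delta>0: "\<Delta> > 0" using pq q1 by (simp add: \<Delta> less_max_iff_disj)
  have D0: "D > 0" using \<Delta>0 gf q1 r1 by (simp add: D)
  have \<delta>0: "\<delta> \<ge> 0" using pq pr by (simp add: \<delta>)
  define P where "P gi = {p::int\<times>int. - gi - 1/2 < of_int (fst p) \<and> of_int (fst p) < - gi - 1/2 + (real q + 1) \<and>
            \<bar>real rr * of_int (fst p) - real qq * of_int (snd p) - h * gi\<bar> < D}" for gi
  have PC: "real (card (P gi)) \<le> (2 * D + 1) * ((real q + 1) / real qq + 1) \<and> finite (P gi)" for gi
    unfolding P_def using gf D0 by (intro pair_count) auto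
  define l where "l c c' = max (c - \<psi> q / real q) (c' - \<psi> r / real r)" for c c'
  define K where "K p = cbox (l ((of_int (fst (fst p)) + fst g) / real q) ((of_int (snd (fst p)) + fst g) / real r),
                               l ((of_int (fst (snd p)) + snd g) / real q) ((of_int (snd (snd p)) + snd g) / real r))
                              (l ((of_int (fst (fst p)) + fst g) / real q) ((of_int (snd (fst p)) + fst g) / real r) + \<delta>,
                               l ((of_int (fst (snd p)) + snd g) / real q) ((of_int (snd (snd p)) + snd g) / real r) + \<delta>)"
    for p :: "(int \<times> int) \<times> (int \<times> int)"
  have coordK: "l ((of_int u + gi) / real q) ((of_int v + gi) / real r) \<le> y \<and>
                y \<le> l ((of_int u + gi) / real q) ((of_int v + gi) / real r) + \<delta>"
    if "\<bar>real q * y - of_int u - gi\<bar> < \<psi> q" "\<bar>real r * y - of_int v - gi\<bar> < \<psi> r" for y u v gi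
  proof -
    have "\<bar>y - (of_int u + gi) / real q\<bar> < \<psi> q / real q"
    proof -
      have "real q * y - of_int u - gi = real q * (y - (of_int u + gi) / real q)" using q1 by (simp add: field_simps)
      then show ?thesis using that(1) q1 by (simp add: abs_mult field_simps)
    qed
    moreover have "\<bar>y - (of_int v + gi) / real r\<bar> < \<psi> r / real r"
    proof -
      have "real r * y - of_int v - gi = real r * (y - (of_int v + gi) / real r)" using r1 by (simp add: field_simps)
      then show ?thesis using that(2) r1 by (simp add: abs_mult field_simps)
    qed
    ultimately have "max ((of_int u + gi) / real q - \<psi> q / real q) ((of_int v + gi) / real r - \<psi> r / real r) \<le> y \<and>
        y \<le> max ((of_int u + gi) / real q - \<psi> q / real q) ((of_int v + gi) / real r - \<psi> r / real r)
          + min (2 * (\<psi> q / real q)) (2 * (\<psi> r / real r))"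
      by (rule box_coord)
    then show ?thesis by (simp add: l_def \<delta>)
  qed
  have cover: "Eq' g \<sigma> A a \<psi> q \<inter> Eq' g \<sigma> A a \<psi> r \<subseteq> (\<Union>p\<in>P (fst g) \<times> P (snd g). K p)"
  proof
    fix x assume x: "x \<in> Eq' g \<sigma> A a \<psi> q \<inter> Eq' g \<sigma> A a \<psi> r"
    obtain u where u: "\<bar>real q * fst x - of_int (fst u) - fst g\<bar> < \<psi> q" "\<bar>real q * snd x - of_int (snd u) - snd g\<bar> < \<psi> q"
      using Eq_mem[of x g \<sigma> A a \<psi> q] x by blast
    obtain v where v: "\<bar>real r * fst x - of_int (fst v) - fst g\<bar> < \<psi> r" "\<bar>real r * snd x - of_int (snd v) - snd g\<bar> < \<psi> r"
      using Eq_mem[of x g \<sigma> A a \<psi> r] x by blast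
    have x01: "0 \<le> fst x" "fst x \<le> 1" "0 \<le> snd x" "snd x \<le> 1" using Eq_mem[of x g \<sigma> A a \<psi> q] x by auto
    have p1: "(fst u, fst v) \<in> P (fst g)"
      using u_range[OF x01(1,2) pq(2) u(1)] lin_comb[OF q1 r1 u(1) v(1)]
      by (simp add: P_def h_def qq_def rr_def D \<Delta> gg)
    have p2: "(snd u, snd v) \<in> P (snd g)"
      using u_range[OF x01(3,4) pq(2) u(2)] lin_comb[OF q1 r1 u(2) v(2)]
      by (simp add: P_def h_def qq_def rr_def D \<Delta> gg)
    have "x \<in> K ((fst u, fst v), (snd u, snd v))"
      using coordK[OF u(1) v(1)] coordK[OF u(2) v(2)] by (simp add: K_def mem_cbox2)
    then show "x \<in> (\<Union>p\<in>P (fst g) \<times> P (snd g). K p)" using p1 p2 by blast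
  qed
  have finPP: "finite (P (fst g) \<times> P (snd g))" using PC by simp
  have Km: "K p \<in> lmeasurable" for p unfolding K_def by simp
  have mK: "measure lebesgue (K p) = \<delta> * \<delta>" for p
  proof -
    have "measure lebesgue (cbox (x1, x2) (x1 + \<delta>, x2 + \<delta>)) = \<delta> * \<delta>" for x1 x2
      using cbox2_measure[of x1 "x1 + \<delta>" x2 "x2 + \<delta>"] \<delta>0 by simp
    then show ?thesis unfolding K_def by blast
  qed
  have "measure lebesgue (Eq' g \<sigma> A a \<psi> q \<inter> Eq' g \<sigma> A a \<psi> r) \<le> measure lebesgue (\<Union>p\<in>P (fst g) \<times> P (snd g). K p)"
    using cover Eq_sets finPP Km by (intro measure_mono_fmeasurable) auto
  also have "\<dots> \<le> (\<Sum>p\<in>P (fst g) \<times> P (snd g). measure lebesgue (K p))"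
    using finPP Km by (intro measure_UNION_le) auto
  also have "\<dots> = real (card (P (fst g))) * real (card (P (snd g))) * (\<delta> * \<delta>)"
    by (simp add: mK card_cartesian_product)
  also have "\<dots> \<le> ((2 * D + 1) * (3 * gg)) * ((2 * D + 1) * (3 * gg)) * (\<delta> * \<delta>)"
  proof -
    have "(real q + 1) / real qq + 1 \<le> 3 * gg"
    proof -
      have "(real q + 1) / real qq = gg + 1 / real qq" using gf by (simp add: field_simps)
      moreover have "1 / real qq \<le> 1" using gf(4) by simp
      ultimately show ?thesis using g1 by linarith
    qed
    then have "(2 * D + 1) * ((real q + 1) / real qq + 1) \<le> (2 * D + 1) * (3 * gg)"
      using D0 by (intro mult_left_mono) auto
    then have c: "real (card (P gi)) \<le> (2 * D + 1) * (3 * gg)" for gi using PC[of gi] by linarith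
    show ?thesis using \<delta>0 D0 g1 by (intro mult_right_mono mult_mono c) auto
  qed
  also have "\<dots> \<le> 72 * (\<delta>\<^sup>2 * gg\<^sup>2 * (D\<^sup>2 + 1))"
  proof -
    have sq: "0 \<le> (2 * D - 1) * (2 * D - 1)" by simp
    have sqb: "(2 * D + 1) * (2 * D + 1) \<le> 8 * D * D + 2" using sq by (simp add: algebra_simps)
    have e1: "((2 * D + 1) * (3 * gg)) * ((2 * D + 1) * (3 * gg)) = ((2 * D + 1) * (2 * D + 1)) * (9 * gg * gg)"
      by (simp add: algebra_simps)
    have i1: "((2 * D + 1) * (2 * D + 1)) * (9 * gg * gg) \<le> (8 * D * D + 2) * (9 * gg * gg)"
      by (rule mult_right_mono[OF sqb]) simp
    have i2: "(8 * D * D + 2) * (9 * gg * gg) \<le> 72 * (gg * gg * (D * D + 1))"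
    proof -
      have "(8 * D * D + 2) * 9 \<le> 72 * (D * D + 1)" by simp
      then have "((8 * D * D + 2) * 9) * (gg * gg) \<le> (72 * (D * D + 1)) * (gg * gg)"
        by (rule mult_right_mono) simp
      then show ?thesis by (simp add: algebra_simps)
    qed
    have "((2 * D + 1) * (3 * gg)) * ((2 * D + 1) * (3 * gg)) \<le> 72 * (gg * gg * (D * D + 1))"
      using e1 i1 i2 by linarith
    then have "((2 * D + 1) * (3 * gg)) * ((2 * D + 1) * (3 * gg)) * (\<delta> * \<delta>) \<le> 72 * (gg * gg * (D * D + 1)) * (\<delta> * \<delta>)"
      by (rule mult_right_mono) simp
    then show ?thesis by (simp add: power2_eq_square algebra_simps)
  qed
  finally show ?thesis .
qed

lemma distZ_le: "distZ t \<le> \<bar>t - of_int n\<bar>"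
proof (cases "n \<le> floor t")
  case True
  then have "(of_int n :: real) \<le> of_int (floor t)" by simp
  then have "frac t \<le> \<bar>t - of_int n\<bar>" unfolding frac_def by linarith
  then show ?thesis unfolding distZ_def by linarith
next
  case False
  then have "n \<ge> floor t + 1" by simp
  then have "(of_int n :: real) \<ge> of_int (floor t) + 1" by (metis of_int_add of_int_le_iff of_int_1)
  then have "1 - frac t \<le> \<bar>t - of_int n\<bar>" unfolding frac_def by linarith
  then show ?thesis unfolding distZ_def by linarith
qed

lemma distZ_eq: "\<bar>t - of_int n\<bar> < 1/2 \<Longrightarrow> distZ t = \<bar>t - of_int n\<bar>"
proof -
  assume a: "\<bar>t - of_int n\<bar> < 1/2"
  have f: "frac t = t - of_int (floor t)" by (simp add: frac_def)
  have fl: "of_int (floor t) \<le> t" "t < of_int (floor t) + 1" by linarith+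
  show ?thesis
  proof (cases "n \<le> floor t")
    case True
    then have "n = floor t"
    proof -
      have "of_int n > t - 1/2" using a unfolding abs_less_iff by linarith
      then have "of_int n > of_int (floor t) - (1::real)" using fl by linarith
      then have "n > floor t - 1" by linarith
      then show ?thesis using True by linarith
    qed
    then show ?thesis using a f fl unfolding distZ_def by (auto simp: abs_less_iff)
  next
    case False
    then have "n = floor t + 1"
    proof -
      have "of_int n < t + 1/2" using a unfolding abs_less_iff by linarith
      then have "of_int n < of_int (floor t) + (2::real)" using fl by linarith
      then have "n < floor t + 2" by linarith
      then show ?thesis using False by linarith
    qed
    then show ?thesis using a f fl unfolding distZ_def by (auto simp: abs_less_iff)
  qed
qed

lemma div_contra:
  fixes n m Bn :: nat and An u :: "int \<times> int"
  assumes mn: "m dvd n" and m2: "m \<ge> 2"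
    and g: "gcd3 (int Bn * (fst u mod int n) + fst An, int Bn * (snd u mod int n) + snd An) (int Bn * int n) = 1"
    and d1: "int m dvd int Bn * fst u + fst An" and d2: "int m dvd int Bn * snd u + snd An"
  shows False
proof -
  have mn': "int m dvd int n" using mn by simp
  have "int m dvd int Bn * (x mod int n) + c" if "int m dvd int Bn * x + c" for x c
  proof -
    have eq: "int Bn * (x mod int n) + c = (int Bn * x + c) - int Bn * int n * (x div int n)"
      by (simp add: algebra_simps minus_div_mult_eq_mod[symmetric])
    have dv: "int m dvd int Bn * int n * (x div int n)" using mn' by simp
    show ?thesis unfolding eq by (rule dvd_diff[OF that dv])
  qed
  then have "int m dvd int Bn * (fst u mod int n) + fst An" "int m dvd int Bn * (snd u mod int n) + snd An"
    using d1 d2 by blast+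
  moreover have "int m dvd int Bn * int n" using mn' by simp
  ultimately have "int m dvd gcd3 (int Bn * (fst u mod int n) + fst An, int Bn * (snd u mod int n) + snd An) (int Bn * int n)"
    by (simp add: gcd3_def)
  then have "int m dvd 1" using g by simp
  then show False using m2 by simp
qed

lemma coprime_split:
  fixes qq rr Bn :: nat and u v An :: int
  assumes cop: "coprime qq rr"
    and e: "int Bn * (int rr * u - int qq * v) = (int qq - int rr) * An"
  shows "int qq dvd int Bn * u + An" "int rr dvd int Bn * v + An"
proof -
  have e2: "int rr * (int Bn * u + An) = int qq * (int Bn * v + An)"
    using e by (simp add: algebra_simps)
  have c: "coprime (int qq) (int rr)" using cop by simp
  have "int qq dvd int rr * (int Bn * u + An)" using e2 by simp
  then show "int qq dvd int Bn * u + An" using c by (simp add: coprime_dvd_mult_right_iff)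
  have "int rr dvd int qq * (int Bn * v + An)" using e2 by (metis dvd_triv_left)
  then show "int rr dvd int Bn * v + An" using c by (simp add: coprime_dvd_mult_right_iff coprime_commute)
qed

lemma qq_ge2:
  fixes q r :: nat
  assumes q1: "q \<ge> 1" and r1: "r \<ge> 1" and rq: "r < q" and nd: "\<not> r dvd q"
  shows "q div gcd q r \<ge> 2" "r div gcd q r \<ge> 2" "q div gcd q r dvd q" "r div gcd q r dvd r"
proof -
  have g0: "gcd q r > 0" using q1 by simp
  have a: "q div gcd q r \<ge> 1" "r div gcd q r \<ge> 1" using gdiv_facts[OF q1 r1] by auto
  show "q div gcd q r dvd q" by (metis dvd_def dvd_div_mult_self gcd_dvd1 mult.commute)
  show "r div gcd q r dvd r" by (metis dvd_def dvd_div_mult_self gcd_dvd2 mult.commute)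
  show "q div gcd q r \<ge> 2"
  proof (rule ccontr)
    assume "\<not> q div gcd q r \<ge> 2"
    then have "q div gcd q r = 1" using a by simp
    then have "q = gcd q r" by (metis div_mult_self1_is_m dvd_div_mult_self g0 gcd_dvd1 mult_1)
    then have "q dvd r" by (metis gcd_dvd2)
    then show False using rq r1 by (simp add: dvd_imp_le leD)
  qed
  show "r div gcd q r \<ge> 2"
  proof (rule ccontr)
    assume "\<not> r div gcd q r \<ge> 2"
    then have "r div gcd q r = 1" using a by simp
    then have "r = gcd q r" by (metis div_mult_self1_is_m dvd_div_mult_self g0 gcd_dvd2 mult_1)
    then have "r dvd q" by (metis gcd_dvd1)
    then show False using nd by simp
  qed
qed

lemma empty_gen:
  fixes q r Bn :: nat and An :: "int \<times> int" and D h :: real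
  assumes q1: "q \<ge> 1" and r1: "r \<ge> 1" and rq: "r < q" and nd: "\<not> r dvd q"
    and Dd: "D = max (2 * \<psi> q / real q) (2 * \<psi> r / real r) * real q * real r / real (gcd q r)"
    and hd: "h = real (q div gcd q r) - real (r div gcd q r)"
    and K: "\<And>w1 w2::int. \<bar>of_int w1 - h * fst g\<bar> < D \<Longrightarrow> \<bar>of_int w2 - h * snd g\<bar> < D \<Longrightarrow>
              int Bn * w1 = (int (q div gcd q r) - int (r div gcd q r)) * fst An \<and>
              int Bn * w2 = (int (q div gcd q r) - int (r div gcd q r)) * snd An"
    and which: "Sq g \<sigma> A a \<psi> q = {u \<in> {0..<int q} \<times> {0..<int q}.
                  gcd3 (int Bn * fst u + fst An, int Bn * snd u + snd An) (int Bn * int q) = 1}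
              \<or> Sq g \<sigma> A a \<psi> r = {u \<in> {0..<int r} \<times> {0..<int r}.
                  gcd3 (int Bn * fst u + fst An, int Bn * snd u + snd An) (int Bn * int r) = 1}"
  shows "Eq' g \<sigma> A a \<psi> q \<inter> Eq' g \<sigma> A a \<psi> r = {}"
proof (rule ccontr)
  assume "Eq' g \<sigma> A a \<psi> q \<inter> Eq' g \<sigma> A a \<psi> r \<noteq> {}"
  then obtain x where x: "x \<in> Eq' g \<sigma> A a \<psi> q" "x \<in> Eq' g \<sigma> A a \<psi> r" by blast
  obtain u where u: "(fst u mod int q, snd u mod int q) \<in> Sq g \<sigma> A a \<psi> q"
      "\<bar>real q * fst x - of_int (fst u) - fst g\<bar> < \<psi> q" "\<bar>real q * snd x - of_int (snd u) - snd g\<bar> < \<psi> q"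
    using Eq_mem[OF x(1)] by blast
  obtain v where v: "(fst v mod int r, snd v mod int r) \<in> Sq g \<sigma> A a \<psi> r"
      "\<bar>real r * fst x - of_int (fst v) - fst g\<bar> < \<psi> r" "\<bar>real r * snd x - of_int (snd v) - snd g\<bar> < \<psi> r"
    using Eq_mem[OF x(2)] by blast
  define qq where "qq = q div gcd q r"
  define rr where "rr = r div gcd q r"
  define w1 where "w1 = int rr * fst u - int qq * fst v"
  define w2 where "w2 = int rr * snd u - int qq * snd v"
  have l1: "\<bar>of_int w1 - h * fst g\<bar> < D"
    using lin_comb[OF q1 r1 u(2) v(2)] by (simp add: w1_def Dd hd qq_def rr_def)
  have l2: "\<bar>of_int w2 - h * snd g\<bar> < D"
    using lin_comb[OF q1 r1 u(3) v(3)] by (simp add: w2_def Dd hd qq_def rr_def)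
  have cop: "coprime qq rr" using gdiv_facts[OF q1 r1] by (simp add: qq_def rr_def)
  have k: "int Bn * w1 = (int qq - int rr) * fst An" "int Bn * w2 = (int qq - int rr) * snd An"
    using K[OF l1 l2] by (simp_all add: qq_def rr_def)
  note s1 = coprime_split[OF cop k(1)[unfolded w1_def]]
  note s2 = coprime_split[OF cop k(2)[unfolded w2_def]]
  note qr = qq_ge2[OF q1 r1 rq nd]
  from which show False
  proof
    assume Sq: "Sq g \<sigma> A a \<psi> q = {u \<in> {0..<int q} \<times> {0..<int q}.
                  gcd3 (int Bn * fst u + fst An, int Bn * snd u + snd An) (int Bn * int q) = 1}"
    have "gcd3 (int Bn * (fst u mod int q) + fst An, int Bn * (snd u mod int q) + snd An) (int Bn * int q) = 1"
      using u(1) unfolding Sq by simp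
    then show False using div_contra[OF qr(3) qr(1)] s1(1) s2(1) by (simp add: qq_def)
  next
    assume Sr: "Sq g \<sigma> A a \<psi> r = {u \<in> {0..<int r} \<times> {0..<int r}.
                  gcd3 (int Bn * fst u + fst An, int Bn * snd u + snd An) (int Bn * int r) = 1}"
    have "gcd3 (int Bn * (fst v mod int r) + fst An, int Bn * (snd v mod int r) + snd An) (int Bn * int r) = 1"
      using v(1) unfolding Sr by simp
    then show False using div_contra[OF qr(4) qr(2)] s1(2) s2(2) by (simp add: rr_def)
  qed
qed

lemma K_case2:
  fixes Bn :: nat and An :: "int \<times> int" and hi :: int and h D Dh :: real
  assumes B1: "Bn \<ge> 1" and hh: "h = of_int hi" and h0: "h \<ge> 0"
    and Dh: "Dh = max D (h * mnorm (g - ratpt An Bn))" and small: "\<not> (2 * Dh \<ge> 1 / real Bn)"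
    and w1: "\<bar>of_int w1 - h * fst g\<bar> < D" and w2: "\<bar>of_int w2 - h * snd g\<bar> < D"
  shows "int Bn * w1 = hi * fst An \<and> int Bn * w2 = hi * snd An"
proof -
  have B0: "real Bn > 0" using B1 by simp
  have sm: "real Bn * (2 * Dh) < 1" using small B0 by (simp add: field_simps)
  have m: "mnorm (g - ratpt An Bn) = max \<bar>real Bn * fst g - of_int (fst An)\<bar> \<bar>real Bn * snd g - of_int (snd An)\<bar> / real Bn"
    using B1 by (intro mnorm_ratpt) simp
  have core: "int Bn * w = hi * c"
    if w: "\<bar>of_int w - h * gi\<bar> < D" and cm: "\<bar>real Bn * gi - of_int c\<bar> \<le> real Bn * mnorm (g - ratpt An Bn)"
    for w c :: int and gi :: real
  proof -
    have e: "of_int (int Bn * w - hi * c) = real Bn * (of_int w - h * gi) + h * (real Bn * gi - of_int c)"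
      by (simp add: hh algebra_simps)
    have "\<bar>real Bn * (of_int w - h * gi) + h * (real Bn * gi - of_int c)\<bar>
          \<le> real Bn * \<bar>of_int w - h * gi\<bar> + h * \<bar>real Bn * gi - of_int c\<bar>"
      using B0 h0 by (simp add: abs_triangle_ineq[THEN order_trans] abs_mult)
    also have "\<dots> < real Bn * D + h * (real Bn * mnorm (g - ratpt An Bn))"
      using B0 h0 w cm by (intro add_less_le_mono mult_strict_left_mono mult_left_mono) auto
    also have "\<dots> \<le> real Bn * Dh + real Bn * Dh"
    proof -
      have "D \<le> Dh" "h * mnorm (g - ratpt An Bn) \<le> Dh" using Dh by auto
      then have "real Bn * D \<le> real Bn * Dh" "real Bn * (h * mnorm (g - ratpt An Bn)) \<le> real Bn * Dh"
        using B0 by (simp_all add: mult_left_mono)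
      then show ?thesis by (simp add: algebra_simps)
    qed
    also have "\<dots> < 1" using sm by (simp add: algebra_simps)
    finally have "\<bar>of_int (int Bn * w - hi * c) :: real\<bar> < 1" using e by simp
    then have "int Bn * w - hi * c = 0" by (rule abs_lt1_int)
    then show ?thesis by simp
  qed
  have c1: "\<bar>real Bn * fst g - of_int (fst An)\<bar> \<le> real Bn * mnorm (g - ratpt An Bn)"
    using B0 by (simp add: m)
  have c2: "\<bar>real Bn * snd g - of_int (snd An)\<bar> \<le> real Bn * mnorm (g - ratpt An Bn)"
    using B0 by (simp add: m)
  show ?thesis using core[OF w1 c1] core[OF w2 c2] by simp
qed

lemma K_case3:
  fixes b B :: nat and An :: "int \<times> int" and hi :: int and h D :: real
  assumes b1: "b \<ge> 1" and B4: "real B > 4" and hh: "h = of_int hi" and h0: "h \<ge> 0"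
    and am: "mnorm (g - ratpt An b) \<le> 1 / (real b * sqrt (real B))"
    and D2: "\<not> (2 * D \<ge> 1 / real b)" and hd: "h * distZ2 (real b *\<^sub>R g) \<le> 1/2"
    and w1: "\<bar>of_int w1 - h * fst g\<bar> < D" and w2: "\<bar>of_int w2 - h * snd g\<bar> < D"
  shows "int b * w1 = hi * fst An \<and> int b * w2 = hi * snd An"
proof -
  have b0: "real b > 0" using b1 by simp
  have bD: "real b * D < 1/2" using D2 b0 by (simp add: field_simps)
  have sB: "1 / sqrt (real B) < 1/2"
  proof -
    have "2 < sqrt (real B)" using B4 by (intro real_less_rsqrt) simp
    then show ?thesis by (simp add: divide_less_eq)
  qed
  have m: "mnorm (g - ratpt An b) = max \<bar>real b * fst g - of_int (fst An)\<bar> \<bar>real b * snd g - of_int (snd An)\<bar> / real b"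
    using b1 by (intro mnorm_ratpt) simp
  have mm: "max \<bar>real b * fst g - of_int (fst An)\<bar> \<bar>real b * snd g - of_int (snd An)\<bar> \<le> 1 / sqrt (real B)"
  proof -
    have "max \<bar>real b * fst g - of_int (fst An)\<bar> \<bar>real b * snd g - of_int (snd An)\<bar> / real b \<le> 1 / (real b * sqrt (real B))"
      using am m by simp
    then show ?thesis using b0 by (simp add: field_simps)
  qed
  have a1: "\<bar>real b * fst g - of_int (fst An)\<bar> < 1/2" and a2: "\<bar>real b * snd g - of_int (snd An)\<bar> < 1/2"
    using mm sB by auto
  have dz: "distZ2 (real b *\<^sub>R g) = max \<bar>real b * fst g - of_int (fst An)\<bar> \<bar>real b * snd g - of_int (snd An)\<bar>"
    using distZ_eq[OF a1] distZ_eq[OF a2] by (simp add: distZ2_def)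
  have hc: "h * \<bar>real b * fst g - of_int (fst An)\<bar> \<le> 1/2" "h * \<bar>real b * snd g - of_int (snd An)\<bar> \<le> 1/2"
  proof -
    have "h * \<bar>real b * fst g - of_int (fst An)\<bar> \<le> h * distZ2 (real b *\<^sub>R g)"
         "h * \<bar>real b * snd g - of_int (snd An)\<bar> \<le> h * distZ2 (real b *\<^sub>R g)"
      unfolding dz using h0 by (simp_all add: mult_left_mono)
    then show "h * \<bar>real b * fst g - of_int (fst An)\<bar> \<le> 1/2" "h * \<bar>real b * snd g - of_int (snd An)\<bar> \<le> 1/2"
      using hd by linarith+
  qed
  have core: "int b * w = hi * c"
    if w: "\<bar>of_int w - h * gi\<bar> < D" and cm: "h * \<bar>real b * gi - of_int c\<bar> \<le> 1/2"
    for w c :: int and gi :: real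
  proof -
    have e: "of_int (int b * w - hi * c) = real b * (of_int w - h * gi) + h * (real b * gi - of_int c)"
      by (simp add: hh algebra_simps)
    have "\<bar>real b * (of_int w - h * gi) + h * (real b * gi - of_int c)\<bar>
          \<le> real b * \<bar>of_int w - h * gi\<bar> + h * \<bar>real b * gi - of_int c\<bar>"
      using b0 h0 by (simp add: abs_triangle_ineq[THEN order_trans] abs_mult)
    also have "\<dots> < real b * D + 1/2"
      using b0 w cm by (intro add_less_le_mono mult_strict_left_mono) auto
    also have "\<dots> < 1" using bD by simp
    finally have "\<bar>of_int (int b * w - hi * c) :: real\<bar> < 1" using e by simp
    then have "int b * w - hi * c = 0" by (rule abs_lt1_int)
    then show ?thesis by simp
  qed
  show ?thesis using core[OF w1 hc(1)] core[OF w2 hc(2)] by simp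
qed

lemma near_empty:
  fixes q r :: nat and D h :: real
  assumes q1: "q \<ge> 1" and r1: "r \<ge> 1"
    and Dd: "D = max (2 * \<psi> q / real q) (2 * \<psi> r / real r) * real q * real r / real (gcd q r)"
    and hd: "h = real (q div gcd q r) - real (r div gcd q r)"
    and far: "\<not> distZ2 (h *\<^sub>R g) < D"
  shows "Eq' g \<sigma> A a \<psi> q \<inter> Eq' g \<sigma> A a \<psi> r = {}"
proof (rule ccontr)
  assume "Eq' g \<sigma> A a \<psi> q \<inter> Eq' g \<sigma> A a \<psi> r \<noteq> {}"
  then obtain x where x: "x \<in> Eq' g \<sigma> A a \<psi> q" "x \<in> Eq' g \<sigma> A a \<psi> r" by blast
  obtain u where u: "\<bar>real q * fst x - of_int (fst u) - fst g\<bar> < \<psi> q" "\<bar>real q * snd x - of_int (snd u) - snd g\<bar> < \<psi> q"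
    using Eq_mem[OF x(1)] by blast
  obtain v where v: "\<bar>real r * fst x - of_int (fst v) - fst g\<bar> < \<psi> r" "\<bar>real r * snd x - of_int (snd v) - snd g\<bar> < \<psi> r"
    using Eq_mem[OF x(2)] by blast
  define w1 where "w1 = int (r div gcd q r) * fst u - int (q div gcd q r) * fst v"
  define w2 where "w2 = int (r div gcd q r) * snd u - int (q div gcd q r) * snd v"
  have l1: "\<bar>of_int w1 - h * fst g\<bar> < D"
    using lin_comb[OF q1 r1 u(1) v(1)] by (simp add: w1_def Dd hd)
  have l2: "\<bar>of_int w2 - h * snd g\<bar> < D"
    using lin_comb[OF q1 r1 u(2) v(2)] by (simp add: w2_def Dd hd)
  have "distZ (h * fst g) < D" using distZ_le[of "h * fst g" w1] l1 by (simp add: abs_minus_commute)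
  moreover have "distZ (h * snd g) < D" using distZ_le[of "h * snd g" w2] l2 by (simp add: abs_minus_commute)
  ultimately have "distZ2 (h *\<^sub>R g) < D" by (simp add: distZ2_def)
  then show False using far by simp
qed

lemma Sq_B:
  assumes "2 powr (- real k) < \<psi> q" "\<psi> q \<le> 2 powr (1 - real k)" "real (Bk g k) \<le> 2 powr (\<sigma> * real k)"
  shows "Sq g \<sigma> A a \<psi> q = {u \<in> {0..<int q} \<times> {0..<int q}.
          gcd3 (int (Bk g k) * fst u + fst (A k), int (Bk g k) * snd u + snd (A k)) (int (Bk g k) * int q) = 1}"
proof -
  have "kidx \<psi> q = k" using assms(1,2) by (intro kidx_eq)
  then show ?thesis using assms(3) by (simp add: Sq_def Let_def)
qed

lemma Sq_b:
  assumes "2 powr (- real k) < \<psi> q" "\<psi> q \<le> 2 powr (1 - real k)" "\<not> real (Bk g k) \<le> 2 powr (\<sigma> * real k)"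
  shows "Sq g \<sigma> A a \<psi> q = {u \<in> {0..<int q} \<times> {0..<int q}.
          gcd3 (int (bk g k) * fst u + fst (a k), int (bk g k) * snd u + snd (a k)) (int (bk g k) * int q) = 1}"
proof -
  have "kidx \<psi> q = k" using assms(1,2) by (intro kidx_eq)
  then show ?thesis using assms(3) by (simp add: Sq_def Let_def)
qed

lemma min_max_mult: "min x y * max x y = (x::real) * y"
  by (simp add: min_def max_def mult.commute)

lemma main_core:
  fixes \<gamma> :: "real \<times> real" and \<sigma> :: real and A a :: "nat \<Rightarrow> int \<times> int" and K0 :: nat
    and \<psi> :: "nat \<Rightarrow> real" and q r :: nat and Q R :: real and k l :: nat
  assumes S: "setting \<gamma> \<sigma> A a K0 \<psi>"
    and QR: "0 < Q" "0 < R" "Q < real q" "real q \<le> 2 * Q" "R < real r" "real r \<le> 2 * R" "r < q"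
    and kb: "2 powr (- real k) < \<psi> q" "\<psi> q \<le> 2 powr (1 - real k)"
    and lb: "2 powr (- real l) < \<psi> r" "\<psi> r \<le> 2 powr (1 - real l)"
    and dEq: "Eq = Eq' \<gamma> \<sigma> A a \<psi> q" and dEr: "Er = Eq' \<gamma> \<sigma> A a \<psi> r"
    and dg: "g = real (gcd q r)"
    and d\<Delta>: "\<Delta> = max (2 * \<psi> q / real q) (2 * \<psi> r / real r)"
    and d\<delta>: "\<delta> = min (2 * \<psi> q / real q) (2 * \<psi> r / real r)"
    and dD: "D = \<Delta> * real q * real r / g"
    and dh: "h = real (q div gcd q r) - real (r div gcd q r)"
    and dj: "j = (if \<psi> q / real q > \<psi> r / real r then k else l)"
    and dBj: "Bj = real (Bk \<gamma> j)" and dbj: "bj = real (bk \<gamma> j)"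
    and dDh: "Dh = max D (h * mnorm (\<gamma> - ratpt (A j) (Bk \<gamma> j)))"
    and dlam: "lam = measure lebesgue (Eq \<inter> Er)"
    and dP: "P = measure lebesgue Eq * measure lebesgue Er"
    and dnear: "near = of_bool (distZ2 (h *\<^sub>R \<gamma>) < D)"
  shows "(lam \<le> 20000 * (\<delta>\<^sup>2 * g\<^sup>2 * (D\<^sup>2 + 1)) \<and>
        \<delta>\<^sup>2 * g\<^sup>2 * (D\<^sup>2 + 1) \<le> 20000 * (P + P / D\<^sup>2)) \<and>
       (\<not> r dvd q \<and> Bj \<le> max (2 ^ j * D) (2 powr (\<sigma> * real j)) \<longrightarrow>
          lam \<le> 20000 * (P + P / D\<^sup>2 * near *
            (of_bool (2 * Dh \<ge> 1 / Bj) * of_bool (Bj \<le> 2 powr (\<sigma> * real j))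
             + of_bool (2 powr (\<sigma> * real j) < Bj)))) \<and>
       (\<not> r dvd q \<and> Bj > max (2 ^ j * D) (2 powr (\<sigma> * real j)) \<longrightarrow>
          lam \<le> 20000 * (P + P / D\<^sup>2 * near *
            (of_bool (2 * D \<ge> 1 / bj) * of_bool (h * distZ2 (bj *\<^sub>R \<gamma>) \<le> 1/2)
             + of_bool (h * distZ2 (bj *\<^sub>R \<gamma>) > 1/2))))"
proof -
  have r1: "r \<ge> 1" using QR by (cases r) auto
  have q1: "q \<ge> 1" using r1 QR by simp
  have \<psi>q0: "0 < \<psi> q" using kb by (metis le_less_trans powr_ge_zero)
  have \<psi>r0: "0 < \<psi> r" using lb by (metis le_less_trans powr_ge_zero)
  have \<psi>qh: "\<psi> q \<le> 1/2" and \<psi>rh: "\<psi> r \<le> 1/2" using S by (simp_all add: setting_def)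
  have g0: "g > 0" using q1 by (simp add: dg)
  have \<Delta>0: "\<Delta> > 0" using \<psi>q0 q1 by (simp add: d\<Delta> less_max_iff_disj)
  have D0: "D > 0" using \<Delta>0 g0 q1 r1 by (simp add: dD)
  have lamU: "lam \<le> 72 * (\<delta>\<^sup>2 * g\<^sup>2 * (D\<^sup>2 + 1))"
    unfolding dlam dEq dEr by (rule E_upper[OF q1 r1 \<psi>q0 \<psi>qh \<psi>r0 \<psi>rh d\<Delta> d\<delta> dg dD])
  have lq: "measure lebesgue Eq \<ge> (\<psi> q)^2 / 4" unfolding dEq by (rule E_lower[OF S q1 kb])
  have lr: "measure lebesgue Er \<ge> (\<psi> r)^2 / 4" unfolding dEr by (rule E_lower[OF S r1 lb])
  have PL: "P \<ge> (\<psi> q)^2 / 4 * ((\<psi> r)^2 / 4)" unfolding dP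
    using lq lr by (intro mult_mono) auto
  have P0: "P \<ge> 0" using PL by (smt (verit) zero_le_divide_iff zero_le_mult_iff zero_le_power2)
  have key: "\<delta> * g * D = 4 * \<psi> q * \<psi> r"
  proof -
    have "\<delta> * \<Delta> = (2 * \<psi> q / real q) * (2 * \<psi> r / real r)"
      unfolding d\<delta> d\<Delta> by (rule min_max_mult)
    then show ?thesis using g0 q1 r1 unfolding dD by (simp add: field_simps)
  qed
  define T where "T = \<delta>\<^sup>2 * g\<^sup>2 * (D\<^sup>2 + 1)"
  have T0: "T \<ge> 0" unfolding T_def by simp
  have Teq: "T = 16 * ((\<psi> q)^2 * (\<psi> r)^2) * (1 + 1 / D\<^sup>2)"
  proof -
    have "(\<delta> * g * D)^2 = (4 * \<psi> q * \<psi> r)^2" using key by simp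
    then have "\<delta>\<^sup>2 * g\<^sup>2 * D\<^sup>2 = 16 * ((\<psi> q)^2 * (\<psi> r)^2)" by (simp add: power_mult_distrib)
    then show ?thesis unfolding T_def using D0 by (simp add: field_simps)
  qed
  define X where "X = P + P / D\<^sup>2"
  have X0: "X \<ge> 0" unfolding X_def using P0 by simp
  have TX: "T \<le> 256 * X"
  proof -
    have "16 * ((\<psi> q)^2 * (\<psi> r)^2) \<le> 256 * P" using PL by simp
    then have "16 * ((\<psi> q)^2 * (\<psi> r)^2) * (1 + 1 / D\<^sup>2) \<le> 256 * P * (1 + 1 / D\<^sup>2)"
      by (rule mult_right_mono) simp
    then show ?thesis unfolding Teq X_def by (simp add: algebra_simps)
  qed
  have lamX: "lam \<le> 20000 * X" using lamU TX X0 unfolding T_def by linarith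
  have part1: "lam \<le> 20000 * (\<delta>\<^sup>2 * g\<^sup>2 * (D\<^sup>2 + 1)) \<and> \<delta>\<^sup>2 * g\<^sup>2 * (D\<^sup>2 + 1) \<le> 20000 * (P + P / D\<^sup>2)"
    using lamU TX T0 X0 unfolding T_def X_def by linarith
  have lam_big: "lam \<le> 20000 * (P + P / D\<^sup>2 * near * F)" if "near = 1" "F \<ge> 1" for F
  proof -
    have "P / D\<^sup>2 \<ge> 0" using P0 by simp
    then have "P / D\<^sup>2 * 1 \<le> P / D\<^sup>2 * F" by (rule mult_left_mono[OF that(2)])
    then have "P / D\<^sup>2 \<le> P / D\<^sup>2 * F" by simp
    then show ?thesis using lamX that(1) unfolding X_def by simp
  qed
  have lam_zero: "lam \<le> 20000 * (P + P / D\<^sup>2 * near * F)" if "lam = 0" "near \<ge> 0" "F \<ge> 0" for F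
  proof -
    have "P / D\<^sup>2 * near * F \<ge> 0" using that P0 by simp
    then show ?thesis using that(1) P0 by simp
  qed
  have lam_far: "lam = 0" if "\<not> distZ2 (h *\<^sub>R \<gamma>) < D"
  proof -
    have "Eq \<inter> Er = {}" unfolding dEq dEr
      by (rule near_empty[OF q1 r1 _ dh that]) (simp add: dD d\<Delta> dg)
    then show ?thesis by (simp add: dlam)
  qed
  have near01: "near = 0 \<or> near = 1" by (simp add: dnear)
  have hi: "h = of_int (int (q div gcd q r) - int (r div gcd q r))" by (simp add: dh)
  have h0: "h \<ge> 0"
  proof -
    have "real (r div gcd q r) \<le> real (q div gcd q r)"
      using gdiv_facts[OF q1 r1] QR by (simp add: divide_right_mono)
    then show ?thesis by (simp add: dh)
  qed
  have DD: "D = max (2 * \<psi> q / real q) (2 * \<psi> r / real r) * real q * real r / real (gcd q r)"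
    by (simp add: dD d\<Delta> dg)
  have jcases: "(j = k \<and> \<psi> q / real q > \<psi> r / real r) \<or> (j = l \<and> \<not> \<psi> q / real q > \<psi> r / real r)"
    by (simp add: dj)
  have part2: "\<not> r dvd q \<and> Bj \<le> max (2 ^ j * D) (2 powr (\<sigma> * real j)) \<longrightarrow>
          lam \<le> 20000 * (P + P / D\<^sup>2 * near *
            (of_bool (2 * Dh \<ge> 1 / Bj) * of_bool (Bj \<le> 2 powr (\<sigma> * real j))
             + of_bool (2 powr (\<sigma> * real j) < Bj)))"
  proof
    assume hyp: "\<not> r dvd q \<and> Bj \<le> max (2 ^ j * D) (2 powr (\<sigma> * real j))"
    define F where "F = of_bool (2 * Dh \<ge> 1 / Bj) * of_bool (Bj \<le> 2 powr (\<sigma> * real j))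
             + (of_bool (2 powr (\<sigma> * real j) < Bj) :: real)"
    have F0: "F \<ge> 0" unfolding F_def by simp
    show "lam \<le> 20000 * (P + P / D\<^sup>2 * near * F)"
    proof (cases "distZ2 (h *\<^sub>R \<gamma>) < D")
      case False
      then show ?thesis using lam_zero[OF lam_far[OF False] _ F0] by (simp add: dnear)
    next
      case True
      then have n1: "near = 1" by (simp add: dnear)
      show ?thesis
      proof (cases "F \<ge> 1")
        case True
        then show ?thesis using lam_big[OF n1] by simp
      next
        case False
        then have c1: "\<not> 2 * Dh \<ge> 1 / Bj" and c2: "Bj \<le> 2 powr (\<sigma> * real j)"
          unfolding F_def of_bool_def by (auto split: if_splits)
        have B1: "Bk \<gamma> j \<ge> 1" using Bk_prop by blast
        have K: "int (Bk \<gamma> j) * w1 = (int (q div gcd q r) - int (r div gcd q r)) * fst (A j) \<and>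
                 int (Bk \<gamma> j) * w2 = (int (q div gcd q r) - int (r div gcd q r)) * snd (A j)"
          if "\<bar>of_int w1 - h * fst \<gamma>\<bar> < D" "\<bar>of_int w2 - h * snd \<gamma>\<bar> < D" for w1 w2
          by (rule K_case2[OF B1 hi h0 dDh _ that]) (use c1 in \<open>simp add: dBj\<close>)
        have which: "Sq \<gamma> \<sigma> A a \<psi> q = {u \<in> {0..<int q} \<times> {0..<int q}.
                  gcd3 (int (Bk \<gamma> j) * fst u + fst (A j), int (Bk \<gamma> j) * snd u + snd (A j)) (int (Bk \<gamma> j) * int q) = 1}
              \<or> Sq \<gamma> \<sigma> A a \<psi> r = {u \<in> {0..<int r} \<times> {0..<int r}.
                  gcd3 (int (Bk \<gamma> j) * fst u + fst (A j), int (Bk \<gamma> j) * snd u + snd (A j)) (int (Bk \<gamma> j) * int r) = 1}"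
        proof (cases "j = k \<and> \<psi> q / real q > \<psi> r / real r")
          case True
          then show ?thesis using Sq_B[where k=k and \<psi>=\<psi> and q=q and g=\<gamma> and \<sigma>=\<sigma> and A=A and a=a, OF kb] c2 by (simp add: dBj)
        next
          case False
          then have "j = l" using jcases by blast
          then show ?thesis using Sq_B[where k=l and \<psi>=\<psi> and q=r and g=\<gamma> and \<sigma>=\<sigma> and A=A and a=a, OF lb] c2 by (simp add: dBj)
        qed
        have "Eq \<inter> Er = {}" unfolding dEq dEr
          using empty_gen[OF q1 r1 QR(7) conjunct1[OF hyp] DD dh K which] by simp
        then have "lam = 0" by (simp add: dlam)
        then show ?thesis using lam_zero F0 near01 by auto
      qed
    qed
  qed
  have part3: "\<not> r dvd q \<and> Bj > max (2 ^ j * D) (2 powr (\<sigma> * real j)) \<longrightarrow>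
          lam \<le> 20000 * (P + P / D\<^sup>2 * near *
            (of_bool (2 * D \<ge> 1 / bj) * of_bool (h * distZ2 (bj *\<^sub>R \<gamma>) \<le> 1/2)
             + of_bool (h * distZ2 (bj *\<^sub>R \<gamma>) > 1/2)))"
  proof
    assume hyp: "\<not> r dvd q \<and> Bj > max (2 ^ j * D) (2 powr (\<sigma> * real j))"
    define F where "F = of_bool (2 * D \<ge> 1 / bj) * of_bool (h * distZ2 (bj *\<^sub>R \<gamma>) \<le> 1/2)
             + (of_bool (h * distZ2 (bj *\<^sub>R \<gamma>) > 1/2) :: real)"
    have F0: "F \<ge> 0" unfolding F_def by simp
    show "lam \<le> 20000 * (P + P / D\<^sup>2 * near * F)"
    proof (cases "distZ2 (h *\<^sub>R \<gamma>) < D")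
      case False
      then show ?thesis using lam_zero[OF lam_far[OF False] _ F0] by (simp add: dnear)
    next
      case True
      then have n1: "near = 1" by (simp add: dnear)
      show ?thesis
      proof (cases "F \<ge> 1")
        case True
        then show ?thesis using lam_big[OF n1] by simp
      next
        case False
        then have c1: "\<not> 2 * D \<ge> 1 / bj" and c2: "h * distZ2 (bj *\<^sub>R \<gamma>) \<le> 1/2"
          unfolding F_def of_bool_def by (auto split: if_splits)
        have c3: "\<not> real (Bk \<gamma> j) \<le> 2 powr (\<sigma> * real j)" using hyp by (simp add: dBj)
        have B4: "real (Bk \<gamma> j) > 4"
        proof -
          have qq2: "q div gcd q r \<ge> 2" "r div gcd q r \<ge> 2"
            using qq_ge2[OF q1 r1 QR(7) conjunct1[OF hyp]] by auto
          have "2 ^ j * D > 4"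
          proof (cases "j = k \<and> \<psi> q / real q > \<psi> r / real r")
            case True
            then have jk: "j = k" and gt: "\<psi> q / real q > \<psi> r / real r" by auto
            have e: "2 * \<psi> q / real q = 2 * (\<psi> q / real q)" "2 * \<psi> r / real r = 2 * (\<psi> r / real r)" by simp_all
            have "\<Delta> = 2 * \<psi> q / real q" unfolding d\<Delta> by (rule max_absorb1) (use gt e in linarith)
            then have "D = 2 * \<psi> q * real (r div gcd q r)" unfolding dD
              using gdiv_facts[OF q1 r1] q1 by (simp add: dg field_simps)
            moreover have "2 ^ k * \<psi> q > 1"
              using kb(1) by (simp add: powr_neg_nat field_simps)
            ultimately have "2 ^ j * D = 2 * (2 ^ k * \<psi> q) * real (r div gcd q r)" using jk by simp
            moreover have "1 * 2 < (2 ^ k * \<psi> q) * real (r div gcd q r)"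
              by (rule mult_less_le_imp_less) (use \<open>2 ^ k * \<psi> q > 1\<close> qq2 in auto)
            then have "2 * (2 ^ k * \<psi> q) * real (r div gcd q r) > 2 * 1 * 2" by (simp add: mult_ac)
            ultimately show ?thesis by simp
          next
            case False
            then have jl: "j = l" and le: "\<not> \<psi> q / real q > \<psi> r / real r" using jcases by auto
            have e: "2 * \<psi> q / real q = 2 * (\<psi> q / real q)" "2 * \<psi> r / real r = 2 * (\<psi> r / real r)" by simp_all
            have "\<Delta> = 2 * \<psi> r / real r" unfolding d\<Delta> by (rule max_absorb2) (use le e in linarith)
            then have "D = 2 * \<psi> r * real (q div gcd q r)" unfolding dD
              using gdiv_facts[OF q1 r1] r1 by (simp add: dg field_simps)
            moreover have "2 ^ l * \<psi> r > 1"
              using lb(1) by (simp add: powr_neg_nat field_simps)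
            ultimately have "2 ^ j * D = 2 * (2 ^ l * \<psi> r) * real (q div gcd q r)" using jl by simp
            moreover have "1 * 2 < (2 ^ l * \<psi> r) * real (q div gcd q r)"
              by (rule mult_less_le_imp_less) (use \<open>2 ^ l * \<psi> r > 1\<close> qq2 in auto)
            then have "2 * (2 ^ l * \<psi> r) * real (q div gcd q r) > 2 * 1 * 2" by (simp add: mult_ac)
            ultimately show ?thesis by simp
          qed
          then show ?thesis using hyp by (simp add: dBj)
        qed
        have B2: "2 \<le> Bk \<gamma> j" using B4 by simp
        have b1: "bk \<gamma> j \<ge> 1" using bk_prop[OF B2] by blast
        have am: "mnorm (\<gamma> - ratpt (a j) (bk \<gamma> j)) \<le> 1 / (real (bk \<gamma> j) * sqrt (real (Bk \<gamma> j)))"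
          using S B2 by (simp add: setting_def)
        have K: "int (bk \<gamma> j) * w1 = (int (q div gcd q r) - int (r div gcd q r)) * fst (a j) \<and>
                 int (bk \<gamma> j) * w2 = (int (q div gcd q r) - int (r div gcd q r)) * snd (a j)"
          if "\<bar>of_int w1 - h * fst \<gamma>\<bar> < D" "\<bar>of_int w2 - h * snd \<gamma>\<bar> < D" for w1 w2
          by (rule K_case3[OF b1 B4 hi h0 am _ _ that]) (use c1 c2 in \<open>simp_all add: dbj\<close>)
        have which: "Sq \<gamma> \<sigma> A a \<psi> q = {u \<in> {0..<int q} \<times> {0..<int q}.
                  gcd3 (int (bk \<gamma> j) * fst u + fst (a j), int (bk \<gamma> j) * snd u + snd (a j)) (int (bk \<gamma> j) * int q) = 1}
              \<or> Sq \<gamma> \<sigma> A a \<psi> r = {u \<in> {0..<int r} \<times> {0..<int r}.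
                  gcd3 (int (bk \<gamma> j) * fst u + fst (a j), int (bk \<gamma> j) * snd u + snd (a j)) (int (bk \<gamma> j) * int r) = 1}"
        proof (cases "j = k \<and> \<psi> q / real q > \<psi> r / real r")
          case True
          then show ?thesis using Sq_b[where k=k and \<psi>=\<psi> and q=q and g=\<gamma> and \<sigma>=\<sigma> and A=A and a=a, OF kb] c3 by simp
        next
          case False
          then have "j = l" using jcases by blast
          then show ?thesis using Sq_b[where k=l and \<psi>=\<psi> and q=r and g=\<gamma> and \<sigma>=\<sigma> and A=A and a=a, OF lb] c3 by simp
        qed
        have "Eq \<inter> Er = {}" unfolding dEq dEr
          using empty_gen[OF q1 r1 QR(7) conjunct1[OF hyp] DD dh K which] by simp
        then have "lam = 0" by (simp add: dlam)
        then show ?thesis using lam_zero F0 near01 by auto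
      qed
    qed
  qed
  show ?thesis using part1 part2 part3 by blast
qed

theorem lemma4p1:
  shows "\<exists>C>0. \<forall>(\<gamma>::real \<times> real) (\<sigma>::real) (A::nat \<Rightarrow> int \<times> int) (a::nat \<Rightarrow> int \<times> int)
      (K0::nat) (\<psi>::nat \<Rightarrow> real) (q::nat) (r::nat) (Q::real) (R::real) (k::nat) (l::nat).
    setting \<gamma> \<sigma> A a K0 \<psi> \<and>
    0 < Q \<and> 0 < R \<and> Q < real q \<and> real q \<le> 2 * Q \<and> R < real r \<and> real r \<le> 2 * R \<and> r < q \<and>
    2 powr (- real k) < \<psi> q \<and> \<psi> q \<le> 2 powr (1 - real k) \<and>
    2 powr (- real l) < \<psi> r \<and> \<psi> r \<le> 2 powr (1 - real l)
    \<longrightarrow>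
    (let Eq = Eq' \<gamma> \<sigma> A a \<psi> q; Er = Eq' \<gamma> \<sigma> A a \<psi> r;
         g = real (gcd q r);
         \<Delta> = max (2 * \<psi> q / real q) (2 * \<psi> r / real r);
         \<delta> = min (2 * \<psi> q / real q) (2 * \<psi> r / real r);
         D = \<Delta> * real q * real r / g;
         h = real (q div gcd q r) - real (r div gcd q r);
         j = (if \<psi> q / real q > \<psi> r / real r then k else l);
         Bj = real (Bk \<gamma> j); bj = real (bk \<gamma> j);
         Dh = max D (h * mnorm (\<gamma> - ratpt (A j) (Bk \<gamma> j)));
         lam = measure lebesgue (Eq \<inter> Er);
         P = measure lebesgue Eq * measure lebesgue Er;
         near = of_bool (distZ2 (h *\<^sub>R \<gamma>) < D)
     in
       (lam \<le> C * (\<delta>\<^sup>2 * g\<^sup>2 * (D\<^sup>2 + 1)) \<and>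
        \<delta>\<^sup>2 * g\<^sup>2 * (D\<^sup>2 + 1) \<le> C * (P + P / D\<^sup>2)) \<and>
       (\<not> r dvd q \<and> Bj \<le> max (2 ^ j * D) (2 powr (\<sigma> * real j)) \<longrightarrow>
          lam \<le> C * (P + P / D\<^sup>2 * near *
            (of_bool (2 * Dh \<ge> 1 / Bj) * of_bool (Bj \<le> 2 powr (\<sigma> * real j))
             + of_bool (2 powr (\<sigma> * real j) < Bj)))) \<and>
       (\<not> r dvd q \<and> Bj > max (2 ^ j * D) (2 powr (\<sigma> * real j)) \<longrightarrow>
          lam \<le> C * (P + P / D\<^sup>2 * near *
            (of_bool (2 * D \<ge> 1 / bj) * of_bool (h * distZ2 (bj *\<^sub>R \<gamma>) \<le> 1/2)
             + of_bool (h * distZ2 (bj *\<^sub>R \<gamma>) > 1/2)))))"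
proof (intro exI[of _ "20000::real"] conjI allI impI)
  show "(0::real) < 20000" by simp
next
  fix \<gamma> :: "real \<times> real" and \<sigma> :: real and A a :: "nat \<Rightarrow> int \<times> int" and K0 :: nat
    and \<psi> :: "nat \<Rightarrow> real" and q r :: nat and Q R :: real and k l :: nat
  assume H: "setting \<gamma> \<sigma> A a K0 \<psi> \<and>
    0 < Q \<and> 0 < R \<and> Q < real q \<and> real q \<le> 2 * Q \<and> R < real r \<and> real r \<le> 2 * R \<and> r < q \<and>
    2 powr (- real k) < \<psi> q \<and> \<psi> q \<le> 2 powr (1 - real k) \<and>
    2 powr (- real l) < \<psi> r \<and> \<psi> r \<le> 2 powr (1 - real l)"
  have S: "setting \<gamma> \<sigma> A a K0 \<psi>" using H by blast
  have QR: "0 < Q" "0 < R" "Q < real q" "real q \<le> 2 * Q" "R < real r" "real r \<le> 2 * R" "r < q"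
    using H by blast+
  have kb: "2 powr (- real k) < \<psi> q" "\<psi> q \<le> 2 powr (1 - real k)" using H by blast+
  have lb: "2 powr (- real l) < \<psi> r" "\<psi> r \<le> 2 powr (1 - real l)" using H by blast+
  show "let Eq = Eq' \<gamma> \<sigma> A a \<psi> q; Er = Eq' \<gamma> \<sigma> A a \<psi> r;
         g = real (gcd q r);
         \<Delta> = max (2 * \<psi> q / real q) (2 * \<psi> r / real r);
         \<delta> = min (2 * \<psi> q / real q) (2 * \<psi> r / real r);
         D = \<Delta> * real q * real r / g;
         h = real (q div gcd q r) - real (r div gcd q r);
         j = (if \<psi> q / real q > \<psi> r / real r then k else l);
         Bj = real (Bk \<gamma> j); bj = real (bk \<gamma> j);
         Dh = max D (h * mnorm (\<gamma> - ratpt (A j) (Bk \<gamma> j)));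
         lam = measure lebesgue (Eq \<inter> Er);
         P = measure lebesgue Eq * measure lebesgue Er;
         near = of_bool (distZ2 (h *\<^sub>R \<gamma>) < D)
     in
       (lam \<le> 20000 * (\<delta>\<^sup>2 * g\<^sup>2 * (D\<^sup>2 + 1)) \<and>
        \<delta>\<^sup>2 * g\<^sup>2 * (D\<^sup>2 + 1) \<le> 20000 * (P + P / D\<^sup>2)) \<and>
       (\<not> r dvd q \<and> Bj \<le> max (2 ^ j * D) (2 powr (\<sigma> * real j)) \<longrightarrow>
          lam \<le> 20000 * (P + P / D\<^sup>2 * near *
            (of_bool (2 * Dh \<ge> 1 / Bj) * of_bool (Bj \<le> 2 powr (\<sigma> * real j))
             + of_bool (2 powr (\<sigma> * real j) < Bj)))) \<and>
       (\<not> r dvd q \<and> Bj > max (2 ^ j * D) (2 powr (\<sigma> * real j)) \<longrightarrow>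
          lam \<le> 20000 * (P + P / D\<^sup>2 * near *
            (of_bool (2 * D \<ge> 1 / bj) * of_bool (h * distZ2 (bj *\<^sub>R \<gamma>) \<le> 1/2)
             + of_bool (h * distZ2 (bj *\<^sub>R \<gamma>) > 1/2))))"
    unfolding Let_def
    by (rule main_core[OF S QR kb lb refl refl refl refl refl refl refl refl refl refl refl refl refl refl])
qed

end
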